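(* Let $\boldsymbol{\lambda}\in\Delta_N$, $\boldsymbol{\nu}=(\nu_1,\dots,\nu_N)\in\mathcal{P}_1(\mathbb{R})^N$, $\theta\in[0,1]$ and $\mu^\theta=\mathrm{HMed}_{\boldsymbol{\lambda}}(\theta,\boldsymbol{\nu})$. Assume $\nu_1,\dots,\nu_N$ are absolutely continuous with respect to Lebesgue measure with densities $f_1,\dots,f_N\in L^1(\mathbb{R})$. Then: (i) $\mu^0$ and $\mu^1$ are absolutely continuous with densities $f_{\mu^0},f_{\mu^1}$ satisfying $$\min_{1\le i\le N}f_i\le\min(f_{\mu^0},f_{\mu^1})\le\max(f_{\mu^0},f_{\mu^1})\le\max_{1\le i\le N}f_i\quad\text{a.e. on }\mathbb{R};$$ (ii) for every $\theta\in[0,1]$, $\mu^\theta$ is absolutely continuous, with density denoted $f_{\mu^\theta}$; (iii) if for some $p\in[1,\infty]$, $f_i\in L^p(\mathbb{R})$ for $i=1,\dots,N$, then $f_{\mu^\theta}\in L^p(\mathbb{R})$ and $$\|f_{\mu^\theta}\|_{L^p(\mathbb{R})}\le\|\max_{1\le i\le N}f_i\|_{L^p(\mathbb{R})}\le\sum_{i=1}^N\|f_i\|_{L^p(\mathbb{R})}.$$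
   Context: $\Delta_N=\{(\lambda_1,\dots,\lambda_N)\in\mathbb{R}_+^N:\sum_i\lambda_i=1\}$; $\mathcal{P}_1(\mathbb{R})$ denotes Borel probability measures on $\mathbb{R}$ with finite first moment. For $\nu\in\mathcal{P}_1(\mathbb{R})$, $F_\nu(x)=\nu((-\infty,x])$ and the quantile function is $Q_\nu(t)=\inf\{x\in\mathbb{R}:F_\nu(x)\ge t\}$; one has $(Q_\nu)_\#\mathcal{L}=\nu$ where $\mathcal{L}$ is Lebesgue measure on $[0,1]$. For $\mathbf{x}\in\mathbb{R}^N$, $\mathrm{M}^-_{\boldsymbol{\lambda}}(\mathbf{x})=\inf\{y:\sum_{i:x_i\le y}\lambda_i\ge\frac12\}$ and $\mathrm{M}^+_{\boldsymbol{\lambda}}(\mathbf{x})=\sup\{y:\sum_{i:x_i<y}\lambda_i\le\frac12\}$. Set, for $t\in(0,1)$, $Q^\pm(t)=\mathrm{M}^\pm_{\boldsymbol{\lambda}}(Q_{\nu_1}(t),\dots,Q_{\nu_N}(t))$ and $Q_\theta=(1-\theta)Q^-+\theta Q^+$; $Q_\theta$ is nondecreasing, left-continuous and integrable, hence the quantile function of a probability measure $\mathrm{HMed}_{\boldsymbol{\lambda}}(\theta,\boldsymbol{\nu}):=(Q_\theta)_\#\mathcal{L}\in\mathcal{P}_1(\mathbb{R})$ (horizontal median selection). *)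

theory Defs
  imports "HOL-Probability.Probability"
begin

definition quantile :: "real measure \<Rightarrow> real \<Rightarrow> real" where
  "quantile M t = Inf {x. cdf M x \<ge> t}"

definition med_minus :: "nat \<Rightarrow> (nat \<Rightarrow> real) \<Rightarrow> (nat \<Rightarrow> real) \<Rightarrow> real" where
  "med_minus N lam x = Inf {y. (\<Sum>i\<in>{i\<in>{..<N}. x i \<le> y}. lam i) \<ge> 1/2}"

definition med_plus :: "nat \<Rightarrow> (nat \<Rightarrow> real) \<Rightarrow> (nat \<Rightarrow> real) \<Rightarrow> real" where
  "med_plus N lam x = Sup {y. (\<Sum>i\<in>{i\<in>{..<N}. x i < y}. lam i) \<le> 1/2}"

text \<open>Q_theta on (0,1); the values at t = 0, 1 are irrelevant (Lebesgue null) and set to 0.\<close>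
definition Q_theta :: "nat \<Rightarrow> (nat \<Rightarrow> real) \<Rightarrow> real \<Rightarrow> (nat \<Rightarrow> real measure) \<Rightarrow> real \<Rightarrow> real" where
  "Q_theta N lam \<theta> \<nu> t =
     (if 0 < t \<and> t < 1 then
        (1 - \<theta>) * med_minus N lam (\<lambda>i. quantile (\<nu> i) t)
        + \<theta> * med_plus N lam (\<lambda>i. quantile (\<nu> i) t)
      else 0)"

definition HMed :: "nat \<Rightarrow> (nat \<Rightarrow> real) \<Rightarrow> real \<Rightarrow> (nat \<Rightarrow> real measure) \<Rightarrow> real measure" where
  "HMed N lam \<theta> \<nu> = distr (restrict_space lborel {0..1}) borel (Q_theta N lam \<theta> \<nu>)"

definition is_density :: "real measure \<Rightarrow> (real \<Rightarrow> real) \<Rightarrow> bool" where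
  "is_density M g \<longleftrightarrow> g \<in> borel_measurable borel \<and> (\<forall>x. 0 \<le> g x)
     \<and> M = density lborel (\<lambda>x. ennreal (g x))"

definition memLp :: "ereal \<Rightarrow> (real \<Rightarrow> real) \<Rightarrow> bool" where
  "memLp p f \<longleftrightarrow> f \<in> borel_measurable borel \<and>
     (if p = \<infinity> then esssup lborel (\<lambda>x. ereal \<bar>f x\<bar>) < \<infinity>
      else integrable lborel (\<lambda>x. \<bar>f x\<bar> powr real_of_ereal p))"

definition Lp_norm :: "ereal \<Rightarrow> (real \<Rightarrow> real) \<Rightarrow> real" where
  "Lp_norm p f =
     (if p = \<infinity> then real_of_ereal (esssup lborel (\<lambda>x. ereal \<bar>f x\<bar>))
      else (\<integral>x. \<bar>f x\<bar> powr real_of_ereal p \<partial>lborel) powr (1 / real_of_ereal p))"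

end

theory Submission
  imports Defs
begin


definition addm :: "'a measure \<Rightarrow> 'a measure \<Rightarrow> 'a measure" where
  "addm M N = measure_of (space M) (sets M) (\<lambda>A. emeasure M A + emeasure N A)"

lemma sets_addm[simp]: "sets (addm M N) = sets M"
  by (simp add: addm_def)

lemma emeasure_addm:
  assumes sN: "sets N = sets M" and A: "A \<in> sets M"
  shows "emeasure (addm M N) A = emeasure M A + emeasure N A"
  unfolding addm_def
proof (rule emeasure_measure_of_sigma)
  show "sigma_algebra (space M) (sets M)" ..
  show "positive (sets M) (\<lambda>A. emeasure M A + emeasure N A)"
    by (simp add: positive_def)
  show "countably_additive (sets M) (\<lambda>A. emeasure M A + emeasure N A)"
  proof (rule countably_additiveI)
    fix A :: "nat \<Rightarrow> _" assume A: "range A \<subseteq> sets M" and d: "disjoint_family A"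
    have "(\<Sum>i. emeasure M (A i) + emeasure N (A i)) = (\<Sum>i. emeasure M (A i)) + (\<Sum>i. emeasure N (A i))"
      by (rule suminf_add[symmetric]) auto
    also have "\<dots> = emeasure M (\<Union>i. A i) + emeasure N (\<Union>i. A i)"
      using A d sN by (simp add: suminf_emeasure)
    finally show "(\<Sum>i. emeasure M (A i) + emeasure N (A i)) = emeasure M (\<Union>i. A i) + emeasure N (\<Union>i. A i)" .
  qed
qed (rule A)

lemma le_measure_Ioc_finite:
  fixes M N :: "real measure"
  assumes sM: "sets M = sets borel" and sN: "sets N = sets borel"
    and fM: "finite_measure M" and fN: "finite_measure N"
    and le: "\<And>a b. a \<le> b \<Longrightarrow> emeasure M {a<..b} \<le> emeasure N {a<..b}"
    and A: "A \<in> sets borel"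
  shows "emeasure M A \<le> emeasure N A"
proof -
  interpret M: finite_borel_measure M using fM sM by (simp add: finite_borel_measure_def finite_borel_measure_axioms_def)
  interpret N: finite_borel_measure N using fN sN by (simp add: finite_borel_measure_def finite_borel_measure_axioms_def)
  define G where "G x = cdf N x - cdf M x" for x
  have measle: "measure M {a<..b} \<le> measure N {a<..b}" if "a \<le> b" for a b
    using le[OF that] by (simp add: M.emeasure_eq_measure N.emeasure_eq_measure)
  have Gdiff: "G b - G a = measure N {a<..b} - measure M {a<..b}" if "a < b" for a b
    using M.cdf_diff_eq[OF that] N.cdf_diff_eq[OF that] by (simp add: G_def)
  have mono: "G x \<le> G y" if "x \<le> y" for x y
  proof (cases "x = y")
    case False
    then have "x < y" using that by simp
    then show ?thesis using Gdiff[of x y] measle[of x y] that by simp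
  qed simp
  have rc: "continuous (at_right a) G" for a
    unfolding G_def by (intro continuous_intros M.cdf_is_right_cont N.cdf_is_right_cont)
  define R where "R = interval_measure G"
  have ER: "emeasure R {a<..b} = G b - G a" if "a \<le> b" for a b
    unfolding R_def by (rule emeasure_interval_measure_Ioc[OF that mono rc])
  have sR: "sets R = sets M" unfolding R_def by (simp add: sM)
  define S where "S = addm M R"
  have ES: "emeasure S X = emeasure M X + emeasure R X" if "X \<in> sets borel" for X
    unfolding S_def by (rule emeasure_addm[OF sR]) (simp add: sM that)
  have "S = N"
  proof (rule measure_eqI_generator_eq[where \<Omega>=UNIV and E="range (\<lambda>(a, b). {a<..b::real})"
        and A="\<lambda>i. {- real i<..real i}"])
    fix X assume "X \<in> range (\<lambda>(a, b). {a<..b::real})"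
    then obtain a b where X: "X = {a<..b}" by auto
    show "emeasure S X = emeasure N X"
    proof (cases "a \<le> b")
      case True
      have "emeasure S X = ennreal (measure M X) + ennreal (G b - G a)"
        using ES[of X] ER[OF True] X by (simp add: M.emeasure_eq_measure)
      also have "\<dots> = ennreal (measure N X)"
      proof (cases "a = b")
        case True then show ?thesis using X by simp
      next
        case False
        then have "a < b" using \<open>a \<le> b\<close> by simp
        then show ?thesis using Gdiff[OF \<open>a < b\<close>] measle[OF \<open>a\<le>b\<close>] X
          by (subst ennreal_plus[symmetric]) auto
      qed
      finally show ?thesis by (simp add: N.emeasure_eq_measure)
    next
      case False then show ?thesis using X by simp
    qed
  next
    show "(\<Union>i. {- real (i::nat)<..real i}) = UNIV" by (rule UN_Ioc_eq_UNIV)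
  next
    fix i :: nat
    have "emeasure R {- real i<..real i} < \<infinity>" using ER[of "- real i" "real i"] by simp
    then show "emeasure S {- real i<..real i} \<noteq> \<infinity>"
      using ES[of "{- real i<..real i}"] M.emeasure_real[of "{- real i<..real i}"]
      by (simp add: less_top[symmetric])
  qed (auto simp: Int_stable_def S_def sM sN borel_sigma_sets_Ioc)
  then show ?thesis using ES[OF A] by (metis le_iff_add)
qed

lemma le_measure_Ioc:
  fixes M N :: "real measure"
  assumes sM: "sets M = sets borel" and sN: "sets N = sets borel"
    and le: "\<And>a b. a \<le> b \<Longrightarrow> emeasure M {a<..b} \<le> emeasure N {a<..b}"
    and fin: "\<And>a b. emeasure N {a<..b} < \<infinity>"
    and A: "A \<in> sets borel"
  shows "emeasure M A \<le> emeasure N A"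
proof -
  define I where "I n = {- real n<..real n}" for n :: nat
  have spM: "space M = UNIV" using sets_eq_imp_space_eq[OF sM] by simp
  have spN: "space N = UNIV" using sets_eq_imp_space_eq[OF sN] by simp
  have Ib: "I n \<in> sets borel" for n unfolding I_def by simp
  have EMn: "emeasure (density M (indicator (I n))) X = emeasure M (I n \<inter> X)" if "X \<in> sets borel" for n X
    using that Ib[of n] sM
    by (subst emeasure_density) (auto simp: indicator_inter_arith[symmetric] sM intro!: borel_measurable_indicator)
  have ENn: "emeasure (density N (indicator (I n))) X = emeasure N (I n \<inter> X)" if "X \<in> sets borel" for n X
    using that Ib[of n] sN
    by (subst emeasure_density) (auto simp: indicator_inter_arith[symmetric] sN intro!: borel_measurable_indicator)
  have step: "emeasure M (I n \<inter> A) \<le> emeasure N (I n \<inter> A)" for n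
  proof -
    have "emeasure (density M (indicator (I n))) A \<le> emeasure (density N (indicator (I n))) A"
    proof (rule le_measure_Ioc_finite)
      show "sets (density M (indicator (I n))) = sets borel" using sM by simp
      show "sets (density N (indicator (I n))) = sets borel" using sN by simp
      have leI: "emeasure M (I n \<inter> X) \<le> emeasure N (I n \<inter> X)" if "X = {a<..b}" for X a b
      proof -
        have "I n \<inter> X = {max (- real n) a <.. min (real n) b}" using that unfolding I_def by auto
        then show ?thesis by (cases "max (- real n) a \<le> min (real n) b") (auto intro!: le)
      qed
      show "emeasure (density M (indicator (I n))) {a<..b} \<le> emeasure (density N (indicator (I n))) {a<..b}" for a b
        using leI[of "{a<..b}" a b] by (simp add: EMn ENn)
      have fN: "emeasure N (I n) < \<infinity>" unfolding I_def by (rule fin)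
      have fM: "emeasure M (I n) < \<infinity>" using leI[of "{- real n<..real n}" "- real n" "real n"] fN unfolding I_def
        by (auto intro: le_less_trans)
      show "finite_measure (density N (indicator (I n)))"
        by (rule finite_measureI) (use fN ENn[of UNIV] spN in auto)
      show "finite_measure (density M (indicator (I n)))"
        by (rule finite_measureI) (use fM EMn[of UNIV] spM in auto)
    qed (rule A)
    then show ?thesis using A by (simp add: EMn ENn)
  qed
  have "emeasure M A = (SUP n. emeasure M (I n \<inter> A))"
  proof -
    have "(SUP n. emeasure M (I n \<inter> A)) = emeasure M (\<Union>n. I n \<inter> A)"
    proof (rule SUP_emeasure_incseq)
      show "range (\<lambda>n. I n \<inter> A) \<subseteq> sets M" using A Ib sM by auto
      show "incseq (\<lambda>n. I n \<inter> A)" unfolding I_def incseq_def by auto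
    qed
    also have "(\<Union>n. I n \<inter> A) = A"
      using UN_Ioc_eq_UNIV unfolding I_def by auto
    finally show ?thesis by simp
  qed
  also have "\<dots> \<le> emeasure N A"
  proof (rule SUP_least)
    fix n
    have "emeasure N (I n \<inter> A) \<le> emeasure N A" using A sN by (intro emeasure_mono) auto
    then show "emeasure M (I n \<inter> A) \<le> emeasure N A" using step[of n] by (rule order_trans[rotated])
  qed
  finally show ?thesis .
qed

lemma density_exists:
  fixes M :: "real measure"
  assumes sM: "sets M = sets borel" and fin: "emeasure M UNIV < \<infinity>"
    and ac: "\<And>A. A \<in> sets borel \<Longrightarrow> emeasure lborel A = 0 \<Longrightarrow> emeasure M A = 0"
  shows "\<exists>g. is_density M g"
proof -
  have "absolutely_continuous lborel M"
    unfolding absolutely_continuous_def using ac sM by (auto simp: null_sets_def)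
  from sigma_finite_measure.Radon_Nikodym[OF sigma_finite_lborel this] sM obtain f where
    f: "f \<in> borel_measurable lborel" and df: "density lborel f = M" by auto
  have "(\<integral>\<^sup>+x. f x \<partial>lborel) = emeasure M UNIV"
    using df[symmetric] f by (simp add: emeasure_density)
  then have "(\<integral>\<^sup>+x. f x \<partial>lborel) \<noteq> \<infinity>" using fin by simp
  from nn_integral_noteq_infinite[OF f this] have ae: "AE x in lborel. f x \<noteq> \<infinity>" .
  define g where "g x = enn2real (f x)" for x
  have gm: "g \<in> borel_measurable borel" unfolding g_def using f by simp
  have "density lborel (\<lambda>x. ennreal (g x)) = density lborel f"
    by (rule density_cong) (use gm f ae in \<open>auto simp: g_def less_top\<close>)
  then have "is_density M g" unfolding is_density_def using gm df by (simp add: g_def)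
  then show ?thesis by blast
qed

lemma AE_le_of_density_le:
  fixes g h :: "real \<Rightarrow> real"
  assumes g: "g \<in> borel_measurable borel" and h: "h \<in> borel_measurable borel"
    and h0: "\<And>x. 0 \<le> h x"
    and le: "\<And>A. A \<in> sets borel \<Longrightarrow> (\<integral>\<^sup>+x. ennreal (g x) * indicator A x \<partial>lborel) \<le> (\<integral>\<^sup>+x. ennreal (h x) * indicator A x \<partial>lborel)"
    and fin: "(\<integral>\<^sup>+x. ennreal (h x) \<partial>lborel) < \<infinity>"
  shows "AE x in lborel. g x \<le> h x"
proof -
  define A where "A = {x. h x < g x}"
  have A: "A \<in> sets borel" unfolding A_def using g h by simp
  define X where "X = (\<integral>\<^sup>+x. ennreal (h x) * indicator A x \<partial>lborel)"
  have "X \<le> (\<integral>\<^sup>+x. ennreal (h x) \<partial>lborel)" unfolding X_def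
    by (intro nn_integral_mono) (simp add: indicator_def)
  then have Xf: "X < \<infinity>" using fin by simp
  have split: "(\<integral>\<^sup>+x. ennreal (g x) * indicator A x \<partial>lborel) =
     (\<integral>\<^sup>+x. ennreal (g x - h x) * indicator A x \<partial>lborel) + X"
    unfolding X_def
  proof (subst nn_integral_add[symmetric])
    show "(\<integral>\<^sup>+ x. ennreal (g x) * indicator A x \<partial>lborel) =
      (\<integral>\<^sup>+ x. ennreal (g x - h x) * indicator A x + ennreal (h x) * indicator A x \<partial>lborel)"
    proof (intro nn_integral_cong)
      fix x
      show "ennreal (g x) * indicator A x = ennreal (g x - h x) * indicator A x + ennreal (h x) * indicator A x"
      proof (cases "x \<in> A")
        case True
        then have "g x - h x \<ge> 0" unfolding A_def by simp
        then have "ennreal (g x - h x + h x) = ennreal (g x - h x) + ennreal (h x)"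
          using h0[of x] by (rule ennreal_plus)
        then show ?thesis using True by simp
      qed simp
    qed
  qed (use g h A in auto)
  have "X + (\<integral>\<^sup>+x. ennreal (g x - h x) * indicator A x \<partial>lborel) \<le> X + 0"
    using le[OF A] unfolding split by (simp add: X_def add.commute)
  then have "(\<integral>\<^sup>+x. ennreal (g x - h x) * indicator A x \<partial>lborel) = 0"
    unfolding ennreal_add_left_cancel_le using Xf by auto
  then have "AE x in lborel. ennreal (g x - h x) * indicator A x = 0"
    by (subst (asm) nn_integral_0_iff_AE) (use g h A in simp_all)
  then show ?thesis
    by eventually_elim (auto simp: indicator_def A_def ennreal_eq_0_iff split: if_splits)
qed



lemma sum_filter_mono_real:
  fixes lam :: "nat \<Rightarrow> real"
  assumes "\<forall>i<N. 0 \<le> lam i" and "\<And>i. i < N \<Longrightarrow> P i \<Longrightarrow> Q i"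
  shows "(\<Sum>i\<in>{i\<in>{..<N}. P i}. lam i) \<le> (\<Sum>i\<in>{i\<in>{..<N}. Q i}. lam i)"
  using assms by (intro sum_mono2) auto

lemma sum_filter_all:
  fixes lam :: "nat \<Rightarrow> real"
  assumes "\<And>i. i < N \<Longrightarrow> P i"
  shows "(\<Sum>i\<in>{i\<in>{..<N}. P i}. lam i) = (\<Sum>i<N. lam i)"
proof -
  have "{i\<in>{..<N}. P i} = {..<N}" using assms by auto
  then show ?thesis by simp
qed

lemma sum_filter_none:
  fixes lam :: "nat \<Rightarrow> real"
  assumes "\<And>i. i < N \<Longrightarrow> \<not> P i"
  shows "(\<Sum>i\<in>{i\<in>{..<N}. P i}. lam i) = 0"
  by (rule sum.neutral) (use assms in auto)

lemma med_minus_le_iff: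
  fixes lam xs :: "nat \<Rightarrow> real"
  assumes lam0: "\<forall>i<N. 0 \<le> lam i" and ls: "(\<Sum>i<N. lam i) = 1"
  shows "med_minus N lam xs \<le> x \<longleftrightarrow> 1/2 \<le> (\<Sum>i\<in>{i\<in>{..<N}. xs i \<le> x}. lam i)"
proof -
  define \<sigma> where "\<sigma> y = (\<Sum>i\<in>{i\<in>{..<N}. xs i \<le> y}. lam i)" for y
  define S where "S = {y. 1/2 \<le> \<sigma> y}"
  have N0: "N > 0" using ls by (cases N) auto
  define ymax where "ymax = Max (xs ` {..<N})"
  define ymin where "ymin = Min (xs ` {..<N})"
  have "\<sigma> ymax = 1" unfolding \<sigma>_def ymax_def using ls N0 by (subst sum_filter_all) auto
  then have "ymax \<in> S" unfolding S_def by simp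
  then have Sne: "S \<noteq> {}" by auto
  have bdd: "ymin \<le> y" if "y \<in> S" for y
  proof (rule ccontr)
    assume "\<not> ymin \<le> y"
    then have "\<sigma> y = 0" unfolding \<sigma>_def ymin_def using N0
      by (subst sum_filter_none) (auto, metis Min_le finite_imageI finite_lessThan image_eqI lessThan_iff linorder_not_le order.strict_trans1)
    then show False using that unfolding S_def by simp
  qed
  have mm: "med_minus N lam xs = Inf S" unfolding med_minus_def S_def \<sigma>_def by simp
  show ?thesis
  proof
    assume le: "med_minus N lam xs \<le> x"
    show "1/2 \<le> (\<Sum>i\<in>{i\<in>{..<N}. xs i \<le> x}. lam i)"
    proof (rule ccontr)
      assume "\<not> ?thesis"
      then have lt: "\<sigma> x < 1/2" unfolding \<sigma>_def by simp
      define K where "K = {i\<in>{..<N}. x < xs i}"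
      have Kne: "K \<noteq> {}"
      proof
        assume "K = {}"
        then have "\<sigma> x = 1" unfolding \<sigma>_def K_def using ls by (subst sum_filter_all) auto
        then show False using lt by simp
      qed
      define y1 where "y1 = Min (xs ` K)"
      have fK: "finite K" unfolding K_def by simp
      have y1x: "x < y1" unfolding y1_def using Kne fK by (auto simp: K_def)
      have "y1 \<le> y" if "y \<in> S" for y
      proof (rule ccontr)
        assume "\<not> y1 \<le> y"
        then have "y < y1" by simp
        have "\<sigma> y \<le> \<sigma> x" unfolding \<sigma>_def
        proof (rule sum_filter_mono_real[OF lam0])
          fix i assume i: "i < N" "xs i \<le> y"
          show "xs i \<le> x"
          proof (rule ccontr)
            assume "\<not> xs i \<le> x"
            then have "i \<in> K" using i by (auto simp: K_def)
            then have "y1 \<le> xs i" unfolding y1_def using fK by simp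
            then show False using i \<open>y < y1\<close> by simp
          qed
        qed
        then show False using that lt unfolding S_def by simp
      qed
      then have "y1 \<le> Inf S" using Sne by (intro cInf_greatest) auto
      then show False using le mm y1x by simp
    qed
  next
    assume "1/2 \<le> (\<Sum>i\<in>{i\<in>{..<N}. xs i \<le> x}. lam i)"
    then have "x \<in> S" unfolding S_def \<sigma>_def by simp
    then have "Inf S \<le> x" using bdd by (intro cInf_lower) (auto simp: bdd_below_def)
    then show "med_minus N lam xs \<le> x" using mm by simp
  qed
qed

lemma med_plus_le_iff:
  fixes lam xs :: "nat \<Rightarrow> real"
  assumes lam0: "\<forall>i<N. 0 \<le> lam i" and ls: "(\<Sum>i<N. lam i) = 1"
  shows "med_plus N lam xs \<le> x \<longleftrightarrow> 1/2 < (\<Sum>i\<in>{i\<in>{..<N}. xs i \<le> x}. lam i)"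
proof -
  define \<sigma> where "\<sigma> y = (\<Sum>i\<in>{i\<in>{..<N}. xs i \<le> y}. lam i)" for y
  define \<sigma>' where "\<sigma>' y = (\<Sum>i\<in>{i\<in>{..<N}. xs i < y}. lam i)" for y
  define S where "S = {y. \<sigma>' y \<le> 1/2}"
  have N0: "N > 0" using ls by (cases N) auto
  define ymax where "ymax = Max (xs ` {..<N})"
  define ymin where "ymin = Min (xs ` {..<N})"
  have "\<sigma>' ymin = 0" unfolding \<sigma>'_def ymin_def using N0
    by (subst sum_filter_none) (auto, metis Min_le finite_imageI finite_lessThan image_eqI lessThan_iff linorder_not_le)
  then have "ymin \<in> S" unfolding S_def by simp
  then have Sne: "S \<noteq> {}" by auto
  have bdd: "y \<le> ymax" if "y \<in> S" for y
  proof (rule ccontr)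
    assume "\<not> y \<le> ymax"
    then have "\<sigma>' y = 1" unfolding \<sigma>'_def ymax_def using N0 ls
      by (subst sum_filter_all) (auto, metis Max_ge finite_imageI finite_lessThan image_eqI lessThan_iff linorder_not_le order.strict_trans2)
    then show False using that unfolding S_def by simp
  qed
  have mp: "med_plus N lam xs = Sup S" unfolding med_plus_def S_def \<sigma>'_def by simp
  show ?thesis
  proof
    assume le: "med_plus N lam xs \<le> x"
    show "1/2 < (\<Sum>i\<in>{i\<in>{..<N}. xs i \<le> x}. lam i)"
    proof (rule ccontr)
      assume "\<not> ?thesis"
      then have lt: "\<sigma> x \<le> 1/2" unfolding \<sigma>_def by simp
      define K where "K = {i\<in>{..<N}. x < xs i}"
      have Kne: "K \<noteq> {}"
      proof
        assume "K = {}"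
        then have "\<sigma> x = 1" unfolding \<sigma>_def K_def using ls by (subst sum_filter_all) auto
        then show False using lt by simp
      qed
      define y1 where "y1 = Min (xs ` K)"
      have fK: "finite K" unfolding K_def by simp
      have y1x: "x < y1" unfolding y1_def using Kne fK by (auto simp: K_def)
      have "{i\<in>{..<N}. xs i < y1} = {i\<in>{..<N}. xs i \<le> x}"
      proof safe
        fix i assume i: "i < N" "xs i < y1"
        show "xs i \<le> x"
        proof (rule ccontr)
          assume "\<not> xs i \<le> x"
          then have "i \<in> K" using i by (auto simp: K_def)
          then have "y1 \<le> xs i" unfolding y1_def using fK by simp
          then show False using i by simp
        qed
      next
        fix i assume "i < N" "xs i \<le> x" then show "xs i < y1" using y1x by simp
      qed
      then have "\<sigma>' y1 = \<sigma> x" unfolding \<sigma>'_def \<sigma>_def by simp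
      then have "y1 \<in> S" using lt unfolding S_def by simp
      then have "y1 \<le> Sup S" using bdd by (intro cSup_upper) (auto simp: bdd_above_def)
      then show False using le mp y1x by simp
    qed
  next
    assume gt: "1/2 < (\<Sum>i\<in>{i\<in>{..<N}. xs i \<le> x}. lam i)"
    have "y \<le> x" if "y \<in> S" for y
    proof (rule ccontr)
      assume "\<not> y \<le> x"
      then have "\<sigma> x \<le> \<sigma>' y" unfolding \<sigma>_def \<sigma>'_def
        by (intro sum_filter_mono_real[OF lam0]) auto
      then show False using that gt unfolding S_def \<sigma>_def by simp
    qed
    then have "Sup S \<le> x" using Sne by (intro cSup_least) auto
    then show "med_plus N lam xs \<le> x" using mp by simp
  qed
qed



lemma (in real_distribution) quantile_le_iff:
  assumes t: "0 < t" "t < 1"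
  shows "quantile M t \<le> x \<longleftrightarrow> t \<le> cdf M x"
proof -
  define S where "S = {x. t \<le> cdf M x}"
  have q: "quantile M t = Inf S" unfolding quantile_def S_def by simp
  have "eventually (\<lambda>y. t < cdf M y) at_top"
    using order_tendstoD(1)[OF cdf_lim_at_top_prob t(2)] .
  then obtain y0 where "\<forall>y\<ge>y0. t < cdf M y" by (auto simp: eventually_at_top_linorder)
  then have Sne: "S \<noteq> {}" unfolding S_def by (auto intro!: exI[of _ y0])
  have "eventually (\<lambda>y. cdf M y < t) at_bot"
    using order_tendstoD(2)[OF cdf_lim_at_bot t(1)] .
  then obtain b where b: "\<forall>y\<le>b. cdf M y < t" by (auto simp: eventually_at_bot_linorder)
  have bS: "b \<le> x" if "x \<in> S" for x
  proof (rule ccontr)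
    assume "\<not> b \<le> x"
    then have "x \<le> b" by simp
    then show False using b that by (auto simp: S_def)
  qed
  then have bdd: "bdd_below S" unfolding bdd_below_def by blast
  show ?thesis
  proof
    assume le: "quantile M t \<le> x"
    show "t \<le> cdf M x"
    proof (rule ccontr)
      assume "\<not> t \<le> cdf M x"
      then have lt: "cdf M x < t" by simp
      have "eventually (\<lambda>y. cdf M y < t) (at_right x)"
        using order_tendstoD(2)[OF cdf_is_right_cont[unfolded continuous_within] lt] .
      then obtain c where c: "c > x" "\<And>y. x < y \<Longrightarrow> y < c \<Longrightarrow> cdf M y < t"
        by (auto simp: eventually_at_right_field)
      define y0 where "y0 = (x + c) / 2"
      have y0: "x < y0" "cdf M y0 < t" using c by (auto simp: y0_def)
      have "y0 \<le> z" if "z \<in> S" for z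
      proof (rule ccontr)
        assume "\<not> y0 \<le> z"
        then have "cdf M z \<le> cdf M y0" by (intro cdf_nondecreasing) simp
        then show False using that y0 unfolding S_def by simp
      qed
      then have "y0 \<le> Inf S" using Sne by (intro cInf_greatest) auto
      then show False using le q y0 by simp
    qed
  next
    assume "t \<le> cdf M x"
    then have "x \<in> S" unfolding S_def by simp
    then show "quantile M t \<le> x" unfolding q using bdd by (rule cInf_lower)
  qed
qed

locale hm =
  fixes N :: nat and lam :: "nat \<Rightarrow> real" and \<nu> :: "nat \<Rightarrow> real measure" and f :: "nat \<Rightarrow> real \<Rightarrow> real"
  assumes lam_nonneg: "\<forall>i<N. 0 \<le> lam i" and lam_sum: "(\<Sum>i<N. lam i) = 1"
    and nu_prob: "\<forall>i<N. prob_space (\<nu> i) \<and> sets (\<nu> i) = sets borel"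
    and f_dens: "\<forall>i<N. is_density (\<nu> i) (f i)"
begin

definition "F i x = cdf (\<nu> i) x"
definition "w t x = (\<Sum>i\<in>{i\<in>{..<N}. t \<le> F i x}. lam i)"
definition "Qm t = med_minus N lam (\<lambda>i. quantile (\<nu> i) t)"
definition "Qp t = med_plus N lam (\<lambda>i. quantile (\<nu> i) t)"
definition "Mx x = Max ((\<lambda>i. f i x) ` {..<N})"
definition "mn x = Min ((\<lambda>i. f i x) ` {..<N})"

lemma N0: "0 < N" using lam_sum by (cases N) auto

lemma rd: "i < N \<Longrightarrow> real_distribution (\<nu> i)"
  using nu_prob by (auto simp: real_distribution_def real_distribution_axioms_def)

lemma f_meas[measurable]: "i < N \<Longrightarrow> f i \<in> borel_measurable borel"
  using f_dens by (auto simp: is_density_def)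

lemma f_nonneg: "i < N \<Longrightarrow> 0 \<le> f i x"
  using f_dens by (auto simp: is_density_def)

lemma nu_eq: "i < N \<Longrightarrow> \<nu> i = density lborel (\<lambda>x. ennreal (f i x))"
  using f_dens by (auto simp: is_density_def)

lemma F_mono: "i < N \<Longrightarrow> x \<le> y \<Longrightarrow> F i x \<le> F i y"
  unfolding F_def using rd by (simp add: finite_borel_measure.cdf_nondecreasing real_distribution.finite_borel_measure_M)

lemma F_nonneg: "i < N \<Longrightarrow> 0 \<le> F i x"
  unfolding F_def by (simp add: cdf_def)

lemma F_le1: "i < N \<Longrightarrow> F i x \<le> 1"
  unfolding F_def using rd by (simp add: real_distribution.cdf_bounded_prob)

lemma quantile_le_iff: "i < N \<Longrightarrow> 0 < t \<Longrightarrow> t < 1 \<Longrightarrow> quantile (\<nu> i) t \<le> x \<longleftrightarrow> t \<le> F i x"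
  unfolding F_def using rd by (simp add: real_distribution.quantile_le_iff)

lemma emeasure_nu_Ioc: "i < N \<Longrightarrow> a \<le> b \<Longrightarrow> emeasure (\<nu> i) {a<..b} = ennreal (F i b - F i a)"
  unfolding F_def using rd by (simp add: finite_borel_measure.emeasure_Ioc real_distribution.finite_borel_measure_M)

lemma idx_eq: "0 < t \<Longrightarrow> t < 1 \<Longrightarrow> {i\<in>{..<N}. quantile (\<nu> i) t \<le> x} = {i\<in>{..<N}. t \<le> F i x}"
  using quantile_le_iff by auto

lemma Qm_le_iff: "0 < t \<Longrightarrow> t < 1 \<Longrightarrow> Qm t \<le> x \<longleftrightarrow> 1/2 \<le> w t x"
  unfolding Qm_def w_def using med_minus_le_iff[OF lam_nonneg lam_sum] idx_eq by simp

lemma Qp_le_iff: "0 < t \<Longrightarrow> t < 1 \<Longrightarrow> Qp t \<le> x \<longleftrightarrow> 1/2 < w t x"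
  unfolding Qp_def w_def using med_plus_le_iff[OF lam_nonneg lam_sum] idx_eq by simp

lemma w_anti: "s \<le> t \<Longrightarrow> w t x \<le> w s x"
  unfolding w_def by (rule sum_filter_mono_real[OF lam_nonneg]) auto

lemma w_mono: "x \<le> y \<Longrightarrow> w t x \<le> w t y"
  unfolding w_def using F_mono by (intro sum_filter_mono_real[OF lam_nonneg]) (auto intro: order_trans)

lemma Qm_le_Qp: "0 < t \<Longrightarrow> t < 1 \<Longrightarrow> Qm t \<le> Qp t"
  using Qm_le_iff Qp_le_iff by (meson less_eq_real_def order_refl)

lemma Qm_mono: "0 < s \<Longrightarrow> s \<le> t \<Longrightarrow> t < 1 \<Longrightarrow> Qm s \<le> Qm t"
  using Qm_le_iff w_anti by (smt (verit, best))

lemma Qp_mono: "0 < s \<Longrightarrow> s \<le> t \<Longrightarrow> t < 1 \<Longrightarrow> Qp s \<le> Qp t"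
  using Qp_le_iff w_anti by (smt (verit, best))

lemma w_alt: "w t x = (\<Sum>i<N. if t \<le> F i x then lam i else 0)"
  unfolding w_def by (rule sum.inter_filter) simp

lemma w_meas[measurable]: "(\<lambda>t. w t x) \<in> borel_measurable borel"
  unfolding w_alt by measurable

definition "Qm' t = (if 0 < t \<and> t < 1 then Qm t else 0)"
definition "Qp' t = (if 0 < t \<and> t < 1 then Qp t else 0)"

lemma Qm'_meas[measurable]: "Qm' \<in> borel_measurable borel"
proof (subst borel_measurable_iff_le, intro allI)
  fix a
  have "{t \<in> space borel. Qm' t \<le> a} = {t. (0 < t \<and> t < 1 \<and> 1/2 \<le> w t a) \<or> (\<not> (0 < t \<and> t < 1) \<and> 0 \<le> a)}"
    unfolding Qm'_def using Qm_le_iff by auto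
  also have "\<dots> \<in> sets borel" by measurable
  finally show "{t \<in> space borel. Qm' t \<le> a} \<in> sets borel" .
qed

lemma Qp'_meas[measurable]: "Qp' \<in> borel_measurable borel"
proof (subst borel_measurable_iff_le, intro allI)
  fix a
  have "{t \<in> space borel. Qp' t \<le> a} = {t. (0 < t \<and> t < 1 \<and> 1/2 < w t a) \<or> (\<not> (0 < t \<and> t < 1) \<and> 0 \<le> a)}"
    unfolding Qp'_def using Qp_le_iff by auto
  also have "\<dots> \<in> sets borel" by measurable
  finally show "{t \<in> space borel. Qp' t \<le> a} \<in> sets borel" .
qed

abbreviation "Qt \<theta> \<equiv> Q_theta N lam \<theta> \<nu>"

lemma Qt_eq: "Qt \<theta> t = (1 - \<theta>) * Qm' t + \<theta> * Qp' t"
  unfolding Q_theta_def Qm'_def Qp'_def Qm_def Qp_def by auto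

lemma Qt_in: "0 < t \<Longrightarrow> t < 1 \<Longrightarrow> Qt \<theta> t = (1 - \<theta>) * Qm t + \<theta> * Qp t"
  unfolding Q_theta_def Qm_def Qp_def by auto

lemma Qt_meas[measurable]: "Qt \<theta> \<in> borel_measurable borel"
  unfolding Qt_eq[abs_def] by measurable

lemma emeasure_HMed:
  assumes A: "A \<in> sets borel"
  shows "emeasure (HMed N lam \<theta> \<nu>) A = emeasure lborel {t. 0 < t \<and> t < 1 \<and> Qt \<theta> t \<in> A}"
proof -
  have m: "Qt \<theta> \<in> measurable (restrict_space lborel {0..1}) borel"
    by (rule measurable_restrict_space1) simp
  have "emeasure (HMed N lam \<theta> \<nu>) A = emeasure (restrict_space lborel {0..1}) (Qt \<theta> -` A \<inter> {0..1})"
    unfolding HMed_def using emeasure_distr[OF m A] by (simp add: space_restrict_space)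
  also have "\<dots> = emeasure lborel (Qt \<theta> -` A \<inter> {0..1})"
    by (rule emeasure_restrict_space) auto
  also have "Qt \<theta> -` A \<inter> {0..1} = {t. 0 < t \<and> t < 1 \<and> Qt \<theta> t \<in> A} \<union> (Qt \<theta> -` A \<inter> {0, 1})"
    by auto
  also have "emeasure lborel \<dots> = emeasure lborel {t. 0 < t \<and> t < 1 \<and> Qt \<theta> t \<in> A}"
  proof (rule emeasure_Un_null_set)
    show "{t. 0 < t \<and> t < 1 \<and> Qt \<theta> t \<in> A} \<in> sets lborel" using A by measurable
    have "{0::real, 1} \<in> null_sets lborel" by (simp add: countable_imp_null_set_lborel)
    then show "Qt \<theta> -` A \<inter> {0, 1} \<in> null_sets lborel"
      by (rule null_sets_subset) (use A in auto)
  qed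
  finally show ?thesis .
qed

lemma emeasure_HMed_UNIV: "emeasure (HMed N lam \<theta> \<nu>) UNIV = 1"
proof -
  have "{t. 0 < t \<and> t < 1} = {0<..<1::real}" by auto
  then show ?thesis using emeasure_HMed[of UNIV \<theta>] by simp
qed

lemma sets_HMed[simp]: "sets (HMed N lam \<theta> \<nu>) = sets borel"
  unfolding HMed_def by simp

end



lemma finite_argmax:
  fixes g :: "nat \<Rightarrow> real"
  assumes "0 < N" shows "\<exists>j<N. \<forall>i<N. g i \<le> g j"
proof -
  have "Max (g ` {..<N}) \<in> g ` {..<N}" using assms by (intro Max_in) auto
  then obtain j where j: "j < N" "g j = Max (g ` {..<N})" by auto
  then show ?thesis by (auto intro!: exI[of _ j])
qed

lemma finite_argmin:
  fixes g :: "nat \<Rightarrow> real"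
  assumes "0 < N" shows "\<exists>j<N. \<forall>i<N. g j \<le> g i"
  using finite_argmax[OF assms, of "\<lambda>i. - g i"] by auto

lemma downset_shape:
  fixes D :: "real set"
  assumes sub: "D \<subseteq> {0<..<1}" and down: "\<forall>t\<in>D. \<forall>s. 0 < s \<and> s \<le> t \<longrightarrow> s \<in> D"
  obtains \<tau> where "0 \<le> \<tau>" "\<tau> \<le> 1" "D = {0<..<\<tau>} \<or> D = {0<..\<tau>}"
proof -
  define \<tau> where "\<tau> = Sup (insert 0 D)"
  have bdd: "bdd_above (insert 0 D)"
  proof (rule bdd_aboveI)
    fix x assume "x \<in> insert 0 D" then show "x \<le> 1" using sub by auto
  qed
  have t0: "0 \<le> \<tau>" unfolding \<tau>_def using bdd by (intro cSup_upper) auto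
  have t1: "\<tau> \<le> 1" unfolding \<tau>_def using sub by (intro cSup_least) auto
  have upper: "t \<le> \<tau>" if "t \<in> D" for t unfolding \<tau>_def using bdd that by (intro cSup_upper) auto
  have lower: "s \<in> D" if "0 < s" "s < \<tau>" for s
  proof -
    have "s < Sup (insert 0 D)" using that by (simp add: \<tau>_def)
    then obtain t where tt: "t \<in> insert 0 D" "s < t" using less_cSupE[of s "insert 0 D"] by blast
    then have "t \<in> D" using that by auto
    then show ?thesis using down tt that by auto
  qed
  have "D = {0<..<\<tau>} \<or> D = {0<..\<tau>}"
  proof (cases "\<tau> \<in> D")
    case True
    have "D = {0<..\<tau>}"
    proof
      show "D \<subseteq> {0<..\<tau>}" using upper sub by auto
      show "{0<..\<tau>} \<subseteq> D"
      proof
        fix s assume "s \<in> {0<..\<tau>}"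
        then show "s \<in> D" using lower[of s] True by (cases "s = \<tau>") auto
      qed
    qed
    then show ?thesis ..
  next
    case False
    have "D = {0<..<\<tau>}"
    proof
      show "{0<..<\<tau>} \<subseteq> D" using lower by auto
      show "D \<subseteq> {0<..<\<tau>}"
      proof
        fix s assume "s \<in> D"
        then show "s \<in> {0<..<\<tau>}" using upper[of s] False sub by (cases "s = \<tau>") auto
      qed
    qed
    then show ?thesis ..
  qed
  then show ?thesis using t0 t1 that by blast
qed

lemma downset_measure:
  fixes D :: "real set"
  assumes sub: "D \<subseteq> {0<..<1}" and down: "\<forall>t\<in>D. \<forall>s. 0 < s \<and> s \<le> t \<longrightarrow> s \<in> D"
  shows "D \<in> sets borel" "emeasure lborel D = ennreal (measure lborel D)"
    "\<And>t. t \<in> D \<Longrightarrow> t \<le> measure lborel D" "\<And>s. 0 < s \<Longrightarrow> s < measure lborel D \<Longrightarrow> s \<in> D"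
    "measure lborel D \<le> 1"
proof -
  obtain \<tau> where t0: "0 \<le> \<tau>" and t1: "\<tau> \<le> 1" and t: "D = {0<..<\<tau>} \<or> D = {0<..\<tau>}"
    by (rule downset_shape[OF sub down])
  have m: "measure lborel D = \<tau>"
  proof (rule disjE[OF t])
    assume "D = {0<..<\<tau>}" then show ?thesis using t0 by simp
  next
    assume "D = {0<..\<tau>}" then show ?thesis using t0 by simp
  qed
  have em: "emeasure lborel D = ennreal \<tau>"
  proof (rule disjE[OF t])
    assume "D = {0<..<\<tau>}" then show ?thesis using t0 by simp
  next
    assume "D = {0<..\<tau>}" then show ?thesis using t0 by simp
  qed
  show "D \<in> sets borel"
  proof (rule disjE[OF t])
    assume "D = {0<..<\<tau>}" then show ?thesis by simp
  next
    assume "D = {0<..\<tau>}" then show ?thesis by simp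
  qed
  show "emeasure lborel D = ennreal (measure lborel D)" unfolding m em ..
  show "\<And>t. t \<in> D \<Longrightarrow> t \<le> measure lborel D"
  proof -
    fix x assume "x \<in> D" then show "x \<le> measure lborel D" unfolding m using t by auto
  qed
  show "\<And>s. 0 < s \<Longrightarrow> s < measure lborel D \<Longrightarrow> s \<in> D"
  proof -
    fix x assume "0 < x" "x < measure lborel D" then show "x \<in> D" using t unfolding m by auto
  qed
  show "measure lborel D \<le> 1" unfolding m using t1 .
qed

lemma emeasure_lborel_Ioc_lt_top: "emeasure lborel {a<..b::real} < \<infinity>"
  by (cases "a \<le> b") auto

context hm begin

definition "DD P x = {t. 0 < t \<and> t < 1 \<and> P (w t x)}"

lemma DD_facts:
  assumes Pm: "\<forall>a b. P a \<and> a \<le> b \<longrightarrow> P b"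
  shows "DD P x \<subseteq> {0<..<1}" "\<forall>t\<in>DD P x. \<forall>s. 0 < s \<and> s \<le> t \<longrightarrow> s \<in> DD P x"
proof -
  show "DD P x \<subseteq> {0<..<1}" unfolding DD_def by auto
  have "s \<in> DD P x" if "t \<in> DD P x" "0 < s" "s \<le> t" for s t
  proof -
    have "P (w t x)" "t < 1" using that(1) by (auto simp: DD_def)
    have "P (w s x)" using Pm \<open>P (w t x)\<close> w_anti[OF that(3)] by blast
    then show ?thesis using that \<open>t < 1\<close> by (auto simp: DD_def)
  qed
  then show "\<forall>t\<in>DD P x. \<forall>s. 0 < s \<and> s \<le> t \<longrightarrow> s \<in> DD P x" by blast
qed

lemma DD_bound:
  assumes P0: "\<not> P 0" and "t \<in> DD P x"
  shows "\<exists>i<N. t \<le> F i x"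
proof (rule ccontr)
  assume "\<not> ?thesis"
  then have "w t x = 0" unfolding w_def by (intro sum_filter_none) auto
  then show False using assms by (auto simp: DD_def)
qed

lemma w_one: "(\<And>i. i < N \<Longrightarrow> t \<le> F i x) \<Longrightarrow> w t x = 1"
  unfolding w_def using lam_sum by (subst sum_filter_all) auto

lemma DD_lower:
  assumes Pm: "\<forall>a b. P a \<and> a \<le> b \<longrightarrow> P b" and P0: "\<not> P 0" and P1: "P 1"
    and d: "\<And>i. i < N \<Longrightarrow> F i a + \<delta> \<le> F i b" and d0: "0 \<le> \<delta>"
  shows "measure lborel (DD P a) + \<delta> \<le> measure lborel (DD P b)"
proof -
  note A = downset_measure[OF DD_facts[of P, OF Pm, where x=a]]
  note B = downset_measure[OF DD_facts[of P, OF Pm, where x=b]]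
  define \<tau> where "\<tau> = measure lborel (DD P a)"
  have memb: "s \<in> DD P b" if "0 < s" "s < 1" "s < \<tau> + \<delta>" for s
  proof (cases "s \<le> \<delta>")
    case True
    have "w s b = 1"
    proof (rule w_one)
      fix i assume "i < N" then show "s \<le> F i b" using d[of i] F_nonneg[of i a] True by simp
    qed
    then show ?thesis using that P1 by (simp add: DD_def)
  next
    case False
    then have "s - \<delta> \<in> DD P a" using that A(4)[of "s - \<delta>"] by (simp add: \<tau>_def)
    then have "P (w (s - \<delta>) a)" by (simp add: DD_def)
    moreover have "w (s - \<delta>) a \<le> w s b" unfolding w_def
    proof (rule sum_filter_mono_real[OF lam_nonneg])
      fix i assume "i < N" "s - \<delta> \<le> F i a" then show "s \<le> F i b" using d[of i] by simp
    qed
    ultimately have "P (w s b)" using Pm by blast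
    then show ?thesis using that by (auto simp: DD_def)
  qed
  have dl1: "\<delta> \<le> 1" using d[OF N0] F_nonneg[OF N0, of a] F_le1[OF N0, of b] by simp
  have tnn: "0 \<le> \<tau>" unfolding \<tau>_def by simp
  have le1: "\<tau> + \<delta> \<le> 1"
  proof (rule ccontr)
    assume "\<not> ?thesis"
    define s where "s = (max 1 \<delta> + \<tau> + \<delta>) / 2"
    have s: "1 < s" "\<delta> < s" "s < \<tau> + \<delta>" using \<open>\<not> \<tau> + \<delta> \<le> 1\<close> dl1 tnn unfolding s_def by (auto simp: max_def)
    then have "s - \<delta> \<in> DD P a" using A(4)[of "s - \<delta>"] by (simp add: \<tau>_def)
    then obtain i where i: "i < N" "s - \<delta> \<le> F i a" using DD_bound[of P, OF P0] by blast
    then show False using d[of i] F_le1[of i b] s by simp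
  qed
  have "{0<..<\<tau> + \<delta>} \<subseteq> DD P b" using memb le1 by auto
  then have "measure lborel {0<..<\<tau> + \<delta>} \<le> measure lborel (DD P b)"
    using B(1,2) by (intro measure_mono_fmeasurable) (auto simp: fmeasurable_def)
  then show ?thesis using A(5) d0 by (simp add: \<tau>_def)
qed

lemma DD_upper:
  assumes Pm: "\<forall>a b. P a \<and> a \<le> b \<longrightarrow> P b"
    and d: "\<And>i. i < N \<Longrightarrow> F i b \<le> F i a + \<Delta>" and d0: "0 \<le> \<Delta>"
  shows "measure lborel (DD P b) \<le> measure lborel (DD P a) + \<Delta>"
proof -
  note A = downset_measure[OF DD_facts[of P, OF Pm, where x=a]]
  note B = downset_measure[OF DD_facts[of P, OF Pm, where x=b]]
  define \<tau> where "\<tau> = measure lborel (DD P a)"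
  have "DD P b \<subseteq> {0<..\<tau> + \<Delta>}"
  proof
    fix t assume t: "t \<in> DD P b"
    show "t \<in> {0<..\<tau> + \<Delta>}"
    proof (cases "t \<le> \<Delta>")
      case True
      have "0 \<le> \<tau>" unfolding \<tau>_def by simp
      moreover have "0 < t" using t by (simp add: DD_def)
      ultimately show ?thesis using True by simp
    next
      case False
      have "w t b \<le> w (t - \<Delta>) a" unfolding w_def
      proof (rule sum_filter_mono_real[OF lam_nonneg])
        fix i assume "i < N" "t \<le> F i b" then show "t - \<Delta> \<le> F i a" using d[of i] by simp
      qed
      have "P (w t b)" "t < 1" using t by (auto simp: DD_def)
      then have "P (w (t - \<Delta>) a)" using Pm \<open>w t b \<le> w (t - \<Delta>) a\<close> by blast
      then have "t - \<Delta> \<in> DD P a" using \<open>t < 1\<close> False d0 by (auto simp: DD_def)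
      then have "t - \<Delta> \<le> \<tau>" unfolding \<tau>_def by (rule A(3))
      then show ?thesis using \<open>P (w t b)\<close> t by (auto simp: DD_def)
    qed
  qed
  then have "measure lborel (DD P b) \<le> measure lborel {0<..\<tau> + \<Delta>}"
    using B(1,2) emeasure_lborel_Ioc_lt_top[of 0 "\<tau> + \<Delta>"] by (intro measure_mono_fmeasurable) (auto simp: fmeasurable_def)
  also have "\<dots> \<le> \<tau> + \<Delta>"
  proof -
    have "0 \<le> \<tau>" unfolding \<tau>_def by simp
    then show ?thesis using d0 by simp
  qed
  finally show ?thesis by (simp add: \<tau>_def)
qed

end



context hm begin

lemma Mx_meas[measurable]: "Mx \<in> borel_measurable borel"
  unfolding Mx_def[abs_def] by (rule borel_measurable_Max) auto

lemma mn_meas[measurable]: "mn \<in> borel_measurable borel"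
  unfolding mn_def[abs_def] by (rule borel_measurable_Min) auto

lemma f_le_Mx: "i < N \<Longrightarrow> f i x \<le> Mx x"
  unfolding Mx_def by (rule Max_ge) auto

lemma mn_le_f: "i < N \<Longrightarrow> mn x \<le> f i x"
  unfolding mn_def by (rule Min_le) auto

lemma Mx_attained: "\<exists>j<N. Mx x = f j x"
proof -
  have "Mx x \<in> (\<lambda>i. f i x) ` {..<N}" unfolding Mx_def using N0 by (intro Max_in) auto
  then show ?thesis by auto
qed

lemma mn_attained: "\<exists>j<N. mn x = f j x"
proof -
  have "mn x \<in> (\<lambda>i. f i x) ` {..<N}" unfolding mn_def using N0 by (intro Min_in) auto
  then show ?thesis by auto
qed

lemma Mx_nonneg: "0 \<le> Mx x"
  using f_le_Mx[OF N0] f_nonneg[OF N0] by (rule order_trans[rotated])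

lemma mn_nonneg: "0 \<le> mn x"
  using mn_attained[of x] f_nonneg by auto

lemma Mx_le_sum: "Mx x \<le> (\<Sum>i<N. f i x)"
proof -
  obtain j where j: "j < N" "Mx x = f j x" using Mx_attained by blast
  have "f j x \<le> (\<Sum>i<N. f i x)"
    using j(1) f_nonneg by (intro member_le_sum) auto
  then show ?thesis using j by simp
qed

lemma nn_f: "i < N \<Longrightarrow> (\<integral>\<^sup>+x. ennreal (f i x) \<partial>lborel) = 1"
proof -
  assume i: "i < N"
  have fm: "(\<lambda>x. ennreal (f i x)) \<in> borel_measurable lborel" using f_meas[OF i] by simp
  have "(\<integral>\<^sup>+x. ennreal (f i x) \<partial>lborel) = emeasure (density lborel (\<lambda>x. ennreal (f i x))) UNIV"
    by (simp add: emeasure_density[OF fm])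
  also have "\<dots> = emeasure (\<nu> i) UNIV" using nu_eq[OF i] by simp
  also have "\<dots> = 1" using rd[OF i] real_distribution.space_eq_univ[OF rd[OF i]]
    by (metis prob_space.emeasure_space_1 real_distribution.axioms(1))
  finally show ?thesis .
qed

lemma nn_Mx_fin: "(\<integral>\<^sup>+x. ennreal (Mx x) \<partial>lborel) < \<infinity>"
proof -
  have "(\<integral>\<^sup>+x. ennreal (Mx x) \<partial>lborel) \<le> (\<integral>\<^sup>+x. (\<Sum>i<N. ennreal (f i x)) \<partial>lborel)"
  proof (intro nn_integral_mono)
    fix x
    have "ennreal (Mx x) \<le> ennreal (\<Sum>i<N. f i x)" by (rule ennreal_leI[OF Mx_le_sum])
    also have "\<dots> = (\<Sum>i<N. ennreal (f i x))" by (rule sum_ennreal[symmetric]) (use f_nonneg in auto)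
    finally show "ennreal (Mx x) \<le> (\<Sum>i<N. ennreal (f i x))" .
  qed
  also have "\<dots> = (\<Sum>i<N. \<integral>\<^sup>+x. ennreal (f i x) \<partial>lborel)"
    by (rule nn_integral_sum) auto
  also have "\<dots> = of_nat N" using nn_f by simp
  also have "(of_nat N :: ennreal) < \<infinity>" by (simp add: of_nat_less_top)
  finally show ?thesis .
qed

lemma emeasure_nu_dens: "i < N \<Longrightarrow> A \<in> sets borel \<Longrightarrow> emeasure (\<nu> i) A = (\<integral>\<^sup>+x. ennreal (f i x) * indicator A x \<partial>lborel)"
  using nu_eq by (simp add: emeasure_density)

lemma nu_le_Mx: "i < N \<Longrightarrow> A \<in> sets borel \<Longrightarrow> emeasure (\<nu> i) A \<le> emeasure (density lborel (\<lambda>x. ennreal (Mx x))) A"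
  by (simp add: emeasure_nu_dens emeasure_density, intro nn_integral_mono)
     (auto simp: indicator_def f_le_Mx intro!: ennreal_leI)

lemma mn_le_nu: "i < N \<Longrightarrow> A \<in> sets borel \<Longrightarrow> emeasure (density lborel (\<lambda>x. ennreal (mn x))) A \<le> emeasure (\<nu> i) A"
  by (simp add: emeasure_nu_dens emeasure_density, intro nn_integral_mono)
     (auto simp: indicator_def mn_le_f intro!: ennreal_leI)

definition "PP \<theta> = (if \<theta> = (0::real) then (\<lambda>v::real. 1/2 \<le> v) else (\<lambda>v. 1/2 < v))"

lemma PP_props:
  shows "\<forall>a b. PP \<theta> a \<and> a \<le> b \<longrightarrow> PP \<theta> b" "\<not> PP \<theta> 0" "PP \<theta> 1"
  unfolding PP_def by auto

lemma HMed01_pre: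
  assumes th: "\<theta> = 0 \<or> \<theta> = 1"
  shows "{t. 0 < t \<and> t < 1 \<and> Qt \<theta> t \<in> {..x}} = DD (PP \<theta>) x"
proof -
  have "Qt \<theta> t \<le> x \<longleftrightarrow> PP \<theta> (w t x)" if "0 < t" "t < 1" for t
    using th Qt_in[OF that, of \<theta>] Qm_le_iff[OF that] Qp_le_iff[OF that] by (auto simp: PP_def)
  then show ?thesis unfolding DD_def by auto
qed

lemma DD_mono: "x \<le> y \<Longrightarrow> DD (PP \<theta>) x \<subseteq> DD (PP \<theta>) y"
  unfolding DD_def using PP_props(1)[of \<theta>] w_mono by blast

lemma HMed01_Ioc:
  assumes th: "\<theta> = 0 \<or> \<theta> = 1" and ab: "a \<le> b"
  shows "emeasure (HMed N lam \<theta> \<nu>) {a<..b} = ennreal (measure lborel (DD (PP \<theta>) b) - measure lborel (DD (PP \<theta>) a))"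
proof -
  note A = downset_measure[OF DD_facts[of "PP \<theta>", OF PP_props(1), where x=a]]
  note B = downset_measure[OF DD_facts[of "PP \<theta>", OF PP_props(1), where x=b]]
  have "{t. 0 < t \<and> t < 1 \<and> Qt \<theta> t \<in> {a<..b}} = {t. 0 < t \<and> t < 1 \<and> Qt \<theta> t \<in> {..b}} - {t. 0 < t \<and> t < 1 \<and> Qt \<theta> t \<in> {..a}}"
    by auto
  also have "\<dots> = DD (PP \<theta>) b - DD (PP \<theta>) a" unfolding HMed01_pre[OF th] ..
  finally have eq: "{t. 0 < t \<and> t < 1 \<and> Qt \<theta> t \<in> {a<..b}} = DD (PP \<theta>) b - DD (PP \<theta>) a" .
  have "emeasure (HMed N lam \<theta> \<nu>) {a<..b} = emeasure lborel (DD (PP \<theta>) b - DD (PP \<theta>) a)"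
    using emeasure_HMed[of "{a<..b}" \<theta>] eq by simp
  also have "\<dots> = emeasure lborel (DD (PP \<theta>) b) - emeasure lborel (DD (PP \<theta>) a)"
    using A(1,2) B(1) DD_mono[OF ab] by (intro emeasure_Diff) auto
  also have "\<dots> = ennreal (measure lborel (DD (PP \<theta>) b) - measure lborel (DD (PP \<theta>) a))"
    unfolding A(2) B(2) by (simp add: ennreal_minus)
  finally show ?thesis .
qed

lemma HMed01_upper:
  assumes th: "\<theta> = 0 \<or> \<theta> = 1" and ab: "a \<le> b"
  shows "emeasure (HMed N lam \<theta> \<nu>) {a<..b} \<le> emeasure (density lborel (\<lambda>x. ennreal (Mx x))) {a<..b}"
proof -
  obtain j where j: "j < N" "\<forall>i<N. F i b - F i a \<le> F j b - F j a"
    using finite_argmax[OF N0, of "\<lambda>i. F i b - F i a"] by blast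
  have d0: "0 \<le> F j b - F j a" using F_mono[OF j(1) ab] by simp
  have "measure lborel (DD (PP \<theta>) b) \<le> measure lborel (DD (PP \<theta>) a) + (F j b - F j a)"
    by (rule DD_upper[OF PP_props(1) _ d0]) (use j in auto)
  then have "emeasure (HMed N lam \<theta> \<nu>) {a<..b} \<le> ennreal (F j b - F j a)"
    unfolding HMed01_Ioc[OF th ab] by (intro ennreal_leI) simp
  also have "\<dots> = emeasure (\<nu> j) {a<..b}" using emeasure_nu_Ioc[OF j(1) ab] by simp
  also have "\<dots> \<le> emeasure (density lborel (\<lambda>x. ennreal (Mx x))) {a<..b}"
    by (rule nu_le_Mx[OF j(1)]) simp
  finally show ?thesis .
qed

lemma HMed01_lower:
  assumes th: "\<theta> = 0 \<or> \<theta> = 1" and ab: "a \<le> b"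
  shows "emeasure (density lborel (\<lambda>x. ennreal (mn x))) {a<..b} \<le> emeasure (HMed N lam \<theta> \<nu>) {a<..b}"
proof -
  obtain j where j: "j < N" "\<forall>i<N. F j b - F j a \<le> F i b - F i a"
    using finite_argmin[OF N0, of "\<lambda>i. F i b - F i a"] by blast
  have d0: "0 \<le> F j b - F j a" using F_mono[OF j(1) ab] by simp
  have "measure lborel (DD (PP \<theta>) a) + (F j b - F j a) \<le> measure lborel (DD (PP \<theta>) b)"
    by (rule DD_lower[OF PP_props _ d0]) (use j in auto)
  then have "ennreal (F j b - F j a) \<le> emeasure (HMed N lam \<theta> \<nu>) {a<..b}"
    unfolding HMed01_Ioc[OF th ab] by (intro ennreal_leI) simp
  moreover have "emeasure (density lborel (\<lambda>x. ennreal (mn x))) {a<..b} \<le> emeasure (\<nu> j) {a<..b}"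
    by (rule mn_le_nu[OF j(1)]) simp
  moreover have "emeasure (\<nu> j) {a<..b} = ennreal (F j b - F j a)" using emeasure_nu_Ioc[OF j(1) ab] by simp
  ultimately show ?thesis by simp
qed

lemma HMed01_le:
  assumes th: "\<theta> = 0 \<or> \<theta> = 1" and A: "A \<in> sets borel"
  shows "emeasure (HMed N lam \<theta> \<nu>) A \<le> emeasure (density lborel (\<lambda>x. ennreal (Mx x))) A"
proof (rule le_measure_Ioc[OF _ _ _ _ A])
  show "emeasure (density lborel (\<lambda>x. ennreal (Mx x))) {a<..b} < \<infinity>" for a b
  proof -
    have "emeasure (density lborel (\<lambda>x. ennreal (Mx x))) {a<..b} \<le> (\<integral>\<^sup>+x. ennreal (Mx x) \<partial>lborel)"
      by (simp add: emeasure_density, intro nn_integral_mono) (auto simp: indicator_def)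
    then show ?thesis using nn_Mx_fin by (rule le_less_trans)
  qed
qed (use HMed01_upper[OF th] in auto)

lemma HMed01_ge:
  assumes th: "\<theta> = 0 \<or> \<theta> = 1" and A: "A \<in> sets borel"
  shows "emeasure (density lborel (\<lambda>x. ennreal (mn x))) A \<le> emeasure (HMed N lam \<theta> \<nu>) A"
proof (rule le_measure_Ioc[OF _ _ _ _ A])
  show "emeasure (HMed N lam \<theta> \<nu>) {a<..b} < \<infinity>" for a b
  proof -
    have "emeasure (HMed N lam \<theta> \<nu>) {a<..b} \<le> emeasure (HMed N lam \<theta> \<nu>) UNIV"
      by (rule emeasure_mono) auto
    also have "\<dots> = 1" by (rule emeasure_HMed_UNIV)
    also have "(1::ennreal) < \<infinity>" by simp
    finally show ?thesis .
  qed
qed (use HMed01_lower[OF th] in auto)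

lemma HMed_density_of_le:
  assumes le: "\<And>A. A \<in> sets borel \<Longrightarrow> emeasure (HMed N lam \<theta> \<nu>) A \<le> emeasure (density lborel (\<lambda>x. ennreal (Mx x))) A"
  shows "\<exists>g. is_density (HMed N lam \<theta> \<nu>) g"
proof (rule density_exists)
  show "emeasure (HMed N lam \<theta> \<nu>) UNIV < \<infinity>" using emeasure_HMed_UNIV by simp
  fix A :: "real set" assume A: "A \<in> sets borel" and "emeasure lborel A = 0"
  then have "A \<in> null_sets lborel" by (simp add: null_sets_def)
  then have "emeasure (density lborel (\<lambda>x. ennreal (Mx x))) A = 0"
    using A by (simp add: emeasure_density nn_integral_null_set)
  then show "emeasure (HMed N lam \<theta> \<nu>) A = 0" using le[OF A] by simp
qed simp

lemma dens_le_Mx: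
  assumes g: "is_density (HMed N lam \<theta> \<nu>) g"
    and le: "\<And>A. A \<in> sets borel \<Longrightarrow> emeasure (HMed N lam \<theta> \<nu>) A \<le> emeasure (density lborel (\<lambda>x. ennreal (Mx x))) A"
  shows "AE x in lborel. g x \<le> Mx x"
proof (rule AE_le_of_density_le[OF _ Mx_meas Mx_nonneg _ nn_Mx_fin])
  show "g \<in> borel_measurable borel" using g by (simp add: is_density_def)
  fix A :: "real set" assume A: "A \<in> sets borel"
  have "(\<integral>\<^sup>+x. ennreal (g x) * indicator A x \<partial>lborel) = emeasure (HMed N lam \<theta> \<nu>) A"
    using g A by (simp add: is_density_def emeasure_density)
  also have "\<dots> \<le> emeasure (density lborel (\<lambda>x. ennreal (Mx x))) A" by (rule le[OF A])
  also have "\<dots> = (\<integral>\<^sup>+x. ennreal (Mx x) * indicator A x \<partial>lborel)" using A by (simp add: emeasure_density)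
  finally show "(\<integral>\<^sup>+x. ennreal (g x) * indicator A x \<partial>lborel) \<le> (\<integral>\<^sup>+x. ennreal (Mx x) * indicator A x \<partial>lborel)" .
qed

lemma dens_nn_UNIV: "is_density (HMed N lam \<theta> \<nu>) g \<Longrightarrow> (\<integral>\<^sup>+x. ennreal (g x) \<partial>lborel) = 1"
  using emeasure_HMed_UNIV[of \<theta>] by (simp add: is_density_def emeasure_density)

lemma dens_ge_mn:
  assumes g: "is_density (HMed N lam \<theta> \<nu>) g" and th: "\<theta> = 0 \<or> \<theta> = 1"
  shows "AE x in lborel. mn x \<le> g x"
proof (rule AE_le_of_density_le[OF mn_meas])
  show gm: "g \<in> borel_measurable borel" using g by (simp add: is_density_def)
  show "0 \<le> g x" for x using g by (simp add: is_density_def)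
  show "(\<integral>\<^sup>+x. ennreal (g x) \<partial>lborel) < \<infinity>" using dens_nn_UNIV[OF g] by simp
  fix A :: "real set" assume A: "A \<in> sets borel"
  have "(\<integral>\<^sup>+x. ennreal (mn x) * indicator A x \<partial>lborel) = emeasure (density lborel (\<lambda>x. ennreal (mn x))) A"
    using A by (simp add: emeasure_density)
  also have "\<dots> \<le> emeasure (HMed N lam \<theta> \<nu>) A" by (rule HMed01_ge[OF th A])
  also have "\<dots> = (\<integral>\<^sup>+x. ennreal (g x) * indicator A x \<partial>lborel)"
    using g A by (simp add: is_density_def emeasure_density)
  finally show "(\<integral>\<^sup>+x. ennreal (mn x) * indicator A x \<partial>lborel) \<le> (\<integral>\<^sup>+x. ennreal (g x) * indicator A x \<partial>lborel)" .
qed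

end



lemma osc_comb:
  fixes S0 S1 :: "real set"
  assumes ne: "S0 \<noteq> {}" "S1 \<noteq> {}" and c: "0 < c0" "0 < c1"
    and K: "\<forall>x\<in>S0. \<forall>x'\<in>S0. \<forall>y\<in>S1. \<forall>y'\<in>S1. c0 * (x - x') + c1 * (y - y') \<le> K"
  shows "bdd_above S0" "bdd_below S0" "bdd_above S1" "bdd_below S1"
    "c0 * (Sup S0 - Inf S0) + c1 * (Sup S1 - Inf S1) \<le> K"
proof -
  obtain x0 where x0: "x0 \<in> S0" using ne by blast
  obtain y0 where y0: "y0 \<in> S1" using ne by blast
  have d0: "c0 * (x - x') \<le> K" if "x \<in> S0" "x' \<in> S0" for x x'
    using K that y0 by fastforce
  have d1: "c1 * (y - y') \<le> K" if "y \<in> S1" "y' \<in> S1" for y y'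
    using K that x0 by fastforce
  show b1: "bdd_above S0"
  proof (rule bdd_aboveI)
    fix x assume "x \<in> S0"
    then have "c0 * (x - x0) \<le> K" using d0 x0 by blast
    then show "x \<le> x0 + K / c0" using c by (simp add: field_simps)
  qed
  show b2: "bdd_below S0"
  proof (rule bdd_belowI)
    fix x assume "x \<in> S0"
    then have "c0 * (x0 - x) \<le> K" using d0 x0 by blast
    then show "x0 - K / c0 \<le> x" using c by (simp add: field_simps)
  qed
  show b3: "bdd_above S1"
  proof (rule bdd_aboveI)
    fix x assume "x \<in> S1"
    then have "c1 * (x - y0) \<le> K" using d1 y0 by blast
    then show "x \<le> y0 + K / c1" using c by (simp add: field_simps)
  qed
  show b4: "bdd_below S1"
  proof (rule bdd_belowI)
    fix x assume "x \<in> S1"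
    then have "c1 * (y0 - x) \<le> K" using d1 y0 by blast
    then show "y0 - K / c1 \<le> x" using c by (simp add: field_simps)
  qed
  show "c0 * (Sup S0 - Inf S0) + c1 * (Sup S1 - Inf S1) \<le> K"
  proof (rule ccontr)
    assume neg: "\<not> c0 * (Sup S0 - Inf S0) + c1 * (Sup S1 - Inf S1) \<le> K"
    define e where "e = (c0 * (Sup S0 - Inf S0) + c1 * (Sup S1 - Inf S1) - K) / (2 * (c0 + c1))"
    have e: "0 < e" unfolding e_def using neg c by (intro divide_pos_pos) auto
    obtain x where x: "x \<in> S0" "Sup S0 - e < x" using less_cSupE[of "Sup S0 - e" S0] ne b1 e by auto
    obtain x' where x': "x' \<in> S0" "x' < Inf S0 + e" using cInf_less_iff[of S0 "Inf S0 + e"] ne b2 e by auto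
    obtain y where y: "y \<in> S1" "Sup S1 - e < y" using less_cSupE[of "Sup S1 - e" S1] ne b3 e by auto
    obtain y' where y': "y' \<in> S1" "y' < Inf S1 + e" using cInf_less_iff[of S1 "Inf S1 + e"] ne b4 e by auto
    have "c0 * (Sup S0 - Inf S0 - 2 * e) < c0 * (x - x')" using x x' c by (intro mult_strict_left_mono) auto
    moreover have "c1 * (Sup S1 - Inf S1 - 2 * e) \<le> c1 * (y - y')" using y y' c by (intro mult_left_mono) auto
    moreover have "c0 * (x - x') + c1 * (y - y') \<le> K" using K x x' y y' by blast
    moreover have "c0 * (Sup S0 - Inf S0 - 2 * e) + c1 * (Sup S1 - Inf S1 - 2 * e) = K"
    proof -
      have "2 * e * (c0 + c1) = c0 * (Sup S0 - Inf S0) + c1 * (Sup S1 - Inf S1) - K"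
        unfolding e_def using c by (simp add: field_simps)
      then show ?thesis by (simp add: algebra_simps)
    qed
    ultimately show False by linarith
  qed
qed

context hm begin

lemma Qt_mono: "0 \<le> \<theta> \<Longrightarrow> \<theta> \<le> 1 \<Longrightarrow> 0 < s \<Longrightarrow> s \<le> t \<Longrightarrow> t < 1 \<Longrightarrow> Qt \<theta> s \<le> Qt \<theta> t"
  using Qm_mono[of s t] Qp_mono[of s t]
  by (simp add: Qt_in add_mono mult_left_mono)

lemma Qt0: "0 < t \<Longrightarrow> t < 1 \<Longrightarrow> Qt 0 t = Qm t" by (simp add: Qt_in)
lemma Qt1: "0 < t \<Longrightarrow> t < 1 \<Longrightarrow> Qt 1 t = Qp t" by (simp add: Qt_in)

lemma Qt_comb: "0 < t \<Longrightarrow> t < 1 \<Longrightarrow> Qt \<theta> t = (1 - \<theta>) * Qt 0 t + \<theta> * Qt 1 t"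
  by (simp add: Qt_in Qt0 Qt1)

lemma Qt01_strict:
  assumes th: "\<theta> = 0 \<or> \<theta> = 1" and st: "0 < s" "s < t" "t < 1"
  shows "Qt \<theta> s < Qt \<theta> t"
proof (rule ccontr)
  assume "\<not> ?thesis"
  moreover have "Qt \<theta> s \<le> Qt \<theta> t" using th st by (intro Qt_mono) auto
  ultimately have eq: "Qt \<theta> s = Qt \<theta> t" by simp
  define y where "y = Qt \<theta> t"
  have sub: "{s..t} \<subseteq> {u. 0 < u \<and> u < 1 \<and> Qt \<theta> u \<in> {y}}"
  proof
    fix u assume u: "u \<in> {s..t}"
    have "Qt \<theta> s \<le> Qt \<theta> u" "Qt \<theta> u \<le> Qt \<theta> t" using th st u by (auto intro!: Qt_mono)
    then show "u \<in> {u. 0 < u \<and> u < 1 \<and> Qt \<theta> u \<in> {y}}" using eq u st by (auto simp: y_def)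
  qed
  have "ennreal (t - s) = emeasure lborel {s..t}" using st by simp
  also have "\<dots> \<le> emeasure lborel {u. 0 < u \<and> u < 1 \<and> Qt \<theta> u \<in> {y}}"
    by (rule emeasure_mono[OF sub]) measurable
  also have "\<dots> = emeasure (HMed N lam \<theta> \<nu>) {y}" by (rule emeasure_HMed[symmetric]) simp
  also have "\<dots> \<le> emeasure (density lborel (\<lambda>x. ennreal (Mx x))) {y}" by (rule HMed01_le[OF th]) simp
  also have "\<dots> = 0"
    by (simp add: emeasure_density nn_integral_null_set finite_imp_null_set_lborel)
  finally show False using st by simp
qed

definition "Gc \<theta>0 y = measure lborel {t. 0 < t \<and> t < 1 \<and> Qt \<theta>0 t \<le> y}"

lemma Gc_mono: "mono (Gc \<theta>0)"
proof (rule monoI)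
  fix x y :: real assume "x \<le> y"
  have "measure lborel {t. 0 < t \<and> t < 1 \<and> Qt \<theta>0 t \<le> x} \<le> measure lborel {t. 0 < t \<and> t < 1 \<and> Qt \<theta>0 t \<le> y}"
  proof (rule measure_mono_fmeasurable)
    show "{t. 0 < t \<and> t < 1 \<and> Qt \<theta>0 t \<le> x} \<subseteq> {t. 0 < t \<and> t < 1 \<and> Qt \<theta>0 t \<le> y}" using \<open>x \<le> y\<close> by auto
    show "{t. 0 < t \<and> t < 1 \<and> Qt \<theta>0 t \<le> x} \<in> sets lborel" by measurable
    have "{t. 0 < t \<and> t < 1 \<and> Qt \<theta>0 t \<le> y} \<subseteq> {0<..<1}" by auto
    then have "emeasure lborel {t. 0 < t \<and> t < 1 \<and> Qt \<theta>0 t \<le> y} \<le> emeasure lborel {0<..<1::real}"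
      by (intro emeasure_mono) auto
    then show "{t. 0 < t \<and> t < 1 \<and> Qt \<theta>0 t \<le> y} \<in> fmeasurable lborel"
      by (intro fmeasurableI) (auto simp: le_less_trans top.not_eq_extremum)
  qed
  then show "Gc \<theta>0 x \<le> Gc \<theta>0 y" by (simp add: Gc_def)
qed

lemma Gc_meas[measurable]: "Gc \<theta>0 \<in> borel_measurable borel"
  by (rule borel_measurable_mono[OF Gc_mono])

lemma Gc_Qt:
  assumes th: "\<theta>0 = 0 \<or> \<theta>0 = 1" and t: "0 < t" "t < 1"
  shows "Gc \<theta>0 (Qt \<theta>0 t) = t"
proof -
  have "{u. 0 < u \<and> u < 1 \<and> Qt \<theta>0 u \<le> Qt \<theta>0 t} = {0<..t}"
  proof (intro equalityI subsetI)
    fix u assume "u \<in> {u. 0 < u \<and> u < 1 \<and> Qt \<theta>0 u \<le> Qt \<theta>0 t}"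
    then have u: "0 < u" "u < 1" "Qt \<theta>0 u \<le> Qt \<theta>0 t" by auto
    have "u \<le> t"
    proof (rule ccontr)
      assume "\<not> u \<le> t"
      then have "Qt \<theta>0 t < Qt \<theta>0 u" using Qt01_strict[OF th t(1) _ u(2)] by simp
      then show False using u by simp
    qed
    then show "u \<in> {0<..t}" using u by simp
  next
    fix u assume u: "u \<in> {0<..t}"
    then have "Qt \<theta>0 u \<le> Qt \<theta>0 t" using th t by (intro Qt_mono) auto
    then show "u \<in> {u. 0 < u \<and> u < 1 \<and> Qt \<theta>0 u \<le> Qt \<theta>0 t}" using u t by auto
  qed
  then show ?thesis using t by (simp add: Gc_def)
qed

definition "RR \<theta>0 = {y. 0 < Gc \<theta>0 y \<and> Gc \<theta>0 y < 1 \<and> Qt \<theta>0 (Gc \<theta>0 y) = y}"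
definition "AA \<theta> \<theta>0 A = {y. y \<in> RR \<theta>0 \<and> Qt \<theta> (Gc \<theta>0 y) \<in> A}"

lemma RR_sets[measurable]: "RR \<theta>0 \<in> sets borel"
  unfolding RR_def by measurable

lemma AA_sets[measurable]:
  assumes [measurable]: "A \<in> sets borel" shows "AA \<theta> \<theta>0 A \<in> sets borel"
  unfolding AA_def RR_def by measurable

lemma E1:
  assumes th: "\<theta>0 = 0 \<or> \<theta>0 = 1" and A: "A \<in> sets borel"
  shows "emeasure (HMed N lam \<theta> \<nu>) A = emeasure (HMed N lam \<theta>0 \<nu>) (AA \<theta> \<theta>0 A)"
proof -
  have "{t. 0 < t \<and> t < 1 \<and> Qt \<theta> t \<in> A} = {t. 0 < t \<and> t < 1 \<and> Qt \<theta>0 t \<in> AA \<theta> \<theta>0 A}"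
    using Gc_Qt[OF th] by (auto simp: AA_def RR_def)
  then show ?thesis using emeasure_HMed[OF A] emeasure_HMed[OF AA_sets[OF A]] by simp
qed

end



lemma emeasure_lborel_Icc_lt_top: "emeasure lborel {a..b::real} < \<infinity>"
  by (cases "a \<le> b") auto

context hm begin

lemma AA_sub:
  assumes th0: "\<theta>0 = 0 \<or> \<theta>0 = 1"
  shows "AA \<theta> \<theta>0 {a<..b} \<subseteq> Qt \<theta>0 ` {t. 0 < t \<and> t < 1 \<and> a < Qt \<theta> t \<and> Qt \<theta> t \<le> b}"
proof
  fix y assume "y \<in> AA \<theta> \<theta>0 {a<..b}"
  then have y: "0 < Gc \<theta>0 y" "Gc \<theta>0 y < 1" "Qt \<theta>0 (Gc \<theta>0 y) = y" "a < Qt \<theta> (Gc \<theta>0 y)" "Qt \<theta> (Gc \<theta>0 y) \<le> b"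
    by (auto simp: AA_def RR_def)
  then show "y \<in> Qt \<theta>0 ` {t. 0 < t \<and> t < 1 \<and> a < Qt \<theta> t \<and> Qt \<theta> t \<le> b}"
    by (intro image_eqI[of _ _ "Gc \<theta>0 y"]) auto
qed

lemma K_Ioc:
  assumes th: "0 < \<theta>" "\<theta> < 1" and ab: "a \<le> b"
  shows "AA \<theta> 0 {a<..b} \<in> fmeasurable lborel" "AA \<theta> 1 {a<..b} \<in> fmeasurable lborel"
    "(1 - \<theta>) * measure lborel (AA \<theta> 0 {a<..b}) + \<theta> * measure lborel (AA \<theta> 1 {a<..b}) \<le> b - a"
proof -
  define I where "I = {t. 0 < t \<and> t < 1 \<and> a < Qt \<theta> t \<and> Qt \<theta> t \<le> b}"
  have s0: "AA \<theta> 0 {a<..b} \<subseteq> Qt 0 ` I" unfolding I_def by (rule AA_sub) simp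
  have s1: "AA \<theta> 1 {a<..b} \<subseteq> Qt 1 ` I" unfolding I_def by (rule AA_sub) simp
  have m0: "AA \<theta> 0 {a<..b} \<in> sets lborel" and m1: "AA \<theta> 1 {a<..b} \<in> sets lborel" by simp_all
  have "(AA \<theta> 0 {a<..b} \<in> fmeasurable lborel \<and> AA \<theta> 1 {a<..b} \<in> fmeasurable lborel) \<and>
    (1 - \<theta>) * measure lborel (AA \<theta> 0 {a<..b}) + \<theta> * measure lborel (AA \<theta> 1 {a<..b}) \<le> b - a"
  proof (cases "I = {}")
    case True
    then have "AA \<theta> 0 {a<..b} = {}" "AA \<theta> 1 {a<..b} = {}" using s0 s1 by auto
    then show ?thesis using ab by simp
  next
    case False
    define S0 where "S0 = Qt 0 ` I"
    define S1 where "S1 = Qt 1 ` I"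
    have ne: "S0 \<noteq> {}" "S1 \<noteq> {}" using False by (auto simp: S0_def S1_def)
    have pw: "\<forall>x\<in>S0. \<forall>x'\<in>S0. \<forall>y\<in>S1. \<forall>y'\<in>S1. (1 - \<theta>) * (x - x') + \<theta> * (y - y') \<le> b - a"
    proof (intro ballI)
      fix x x' y y' assume xs: "x \<in> S0" "x' \<in> S0" "y \<in> S1" "y' \<in> S1"
      then obtain v u v' u' where vu: "v \<in> I" "u \<in> I" "v' \<in> I" "u' \<in> I"
        and xe: "x = Qt 0 v" "x' = Qt 0 u" "y = Qt 1 v'" "y' = Qt 1 u'"
        by (auto simp: S0_def S1_def)
      define hi where "hi = max v v'"
      define lo where "lo = min u u'"
      have hiI: "hi \<in> I" unfolding hi_def using vu by (auto simp: max_def)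
      have loI: "lo \<in> I" unfolding lo_def using vu by (auto simp: min_def)
      have I01: "0 < t" "t < 1" if "t \<in> I" for t using that by (auto simp: I_def)
      have "Qt 0 v \<le> Qt 0 hi" using vu hiI I01 by (intro Qt_mono) (auto simp: hi_def)
      moreover have "Qt 0 lo \<le> Qt 0 u" using vu loI I01 by (intro Qt_mono) (auto simp: lo_def)
      moreover have "Qt 1 v' \<le> Qt 1 hi" using vu hiI I01 by (intro Qt_mono) (auto simp: hi_def)
      moreover have "Qt 1 lo \<le> Qt 1 u'" using vu loI I01 by (intro Qt_mono) (auto simp: lo_def)
      ultimately have "(1 - \<theta>) * (x - x') + \<theta> * (y - y') \<le> (1 - \<theta>) * (Qt 0 hi - Qt 0 lo) + \<theta> * (Qt 1 hi - Qt 1 lo)"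
        unfolding xe using th by (intro add_mono mult_left_mono) auto
      also have "\<dots> = Qt \<theta> hi - Qt \<theta> lo"
        using Qt_comb[of hi \<theta>] Qt_comb[of lo \<theta>] I01[OF hiI] I01[OF loI] by (simp add: algebra_simps)
      also have "\<dots> \<le> b - a" using hiI loI by (auto simp: I_def)
      finally show "(1 - \<theta>) * (x - x') + \<theta> * (y - y') \<le> b - a" .
    qed
    note oc = osc_comb[OF ne _ _ pw]
    have c0: "0 < 1 - \<theta>" "0 < \<theta>" using th by auto
    have bnd: "AA \<theta> \<theta>0 {a<..b} \<in> fmeasurable lborel \<and> measure lborel (AA \<theta> \<theta>0 {a<..b}) \<le> Sup S - Inf S"
      if "AA \<theta> \<theta>0 {a<..b} \<subseteq> S" "S \<noteq> {}" "bdd_above S" "bdd_below S" "AA \<theta> \<theta>0 {a<..b} \<in> sets lborel" for S \<theta>0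
    proof -
      have sub: "AA \<theta> \<theta>0 {a<..b} \<subseteq> {Inf S..Sup S}"
      proof
        fix x assume "x \<in> AA \<theta> \<theta>0 {a<..b}"
        then have "x \<in> S" using that(1) by auto
        then show "x \<in> {Inf S..Sup S}" using that(3,4) by (simp add: cInf_lower cSup_upper)
      qed
      have fm: "{Inf S..Sup S} \<in> fmeasurable lborel"
        using emeasure_lborel_Icc_lt_top[of "Inf S" "Sup S"] by (simp add: fmeasurable_def)
      have "AA \<theta> \<theta>0 {a<..b} \<in> fmeasurable lborel" by (rule fmeasurableI2[OF fm sub]) (use that in simp)
      moreover have "measure lborel (AA \<theta> \<theta>0 {a<..b}) \<le> measure lborel {Inf S..Sup S}"
        by (rule measure_mono_fmeasurable[OF sub]) (use that fm in auto)
      moreover have "Inf S \<le> Sup S" using that by (intro cInf_le_cSup) auto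
      ultimately show ?thesis by simp
    qed
    have b0: "AA \<theta> 0 {a<..b} \<in> fmeasurable lborel \<and> measure lborel (AA \<theta> 0 {a<..b}) \<le> Sup S0 - Inf S0"
      by (rule bnd) (use s0 ne oc[OF c0] m0 in \<open>auto simp: S0_def\<close>)
    have b1: "AA \<theta> 1 {a<..b} \<in> fmeasurable lborel \<and> measure lborel (AA \<theta> 1 {a<..b}) \<le> Sup S1 - Inf S1"
      by (rule bnd) (use s1 ne oc[OF c0] m1 in \<open>auto simp: S1_def\<close>)
    have "(1 - \<theta>) * measure lborel (AA \<theta> 0 {a<..b}) + \<theta> * measure lborel (AA \<theta> 1 {a<..b})
        \<le> (1 - \<theta>) * (Sup S0 - Inf S0) + \<theta> * (Sup S1 - Inf S1)"
      using b0 b1 c0 by (intro add_mono mult_left_mono) auto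
    also have "\<dots> \<le> b - a" using oc(5)[OF c0] .
    finally show ?thesis using b0 b1 by simp
  qed
  then show "AA \<theta> 0 {a<..b} \<in> fmeasurable lborel" "AA \<theta> 1 {a<..b} \<in> fmeasurable lborel"
    "(1 - \<theta>) * measure lborel (AA \<theta> 0 {a<..b}) + \<theta> * measure lborel (AA \<theta> 1 {a<..b}) \<le> b - a"
    by auto
qed

definition "LL \<theta> \<theta>0 = distr (density lborel (indicator (RR \<theta>0))) borel (\<lambda>y. Qt \<theta> (Gc \<theta>0 y))"

lemma sets_LL[simp]: "sets (LL \<theta> \<theta>0) = sets borel"
  unfolding LL_def by simp

lemma emeasure_LL:
  assumes A: "A \<in> sets borel"
  shows "emeasure (LL \<theta> \<theta>0) A = emeasure lborel (AA \<theta> \<theta>0 A)"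
proof -
  have m: "(\<lambda>y. Qt \<theta> (Gc \<theta>0 y)) \<in> measurable (density lborel (indicator (RR \<theta>0))) borel"
    by (simp add: measurable_density_eq1)
  have "emeasure (LL \<theta> \<theta>0) A = emeasure (density lborel (indicator (RR \<theta>0))) ((\<lambda>y. Qt \<theta> (Gc \<theta>0 y)) -` A)"
    unfolding LL_def using emeasure_distr[OF m A] by simp
  also have "\<dots> = (\<integral>\<^sup>+x. indicator (RR \<theta>0) x * indicator ((\<lambda>y. Qt \<theta> (Gc \<theta>0 y)) -` A) x \<partial>lborel)"
  proof -
    have pre: "(\<lambda>y. Qt \<theta> (Gc \<theta>0 y)) -` A \<in> sets borel"
      by (rule measurable_sets_borel[OF _ A]) simp
    show ?thesis using pre by (subst emeasure_density) (auto simp: indicator_inter_arith)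
  qed
  also have "\<dots> = (\<integral>\<^sup>+x. indicator (AA \<theta> \<theta>0 A) x \<partial>lborel)"
    by (intro nn_integral_cong) (auto simp: AA_def indicator_def)
  also have "\<dots> = emeasure lborel (AA \<theta> \<theta>0 A)" using A by simp
  finally show ?thesis .
qed

definition "MM \<theta> = addm (scale_measure (ennreal (1 - \<theta>)) (LL \<theta> 0)) (scale_measure (ennreal \<theta>) (LL \<theta> 1))"

lemma emeasure_MM:
  assumes A: "A \<in> sets borel"
  shows "emeasure (MM \<theta>) A = ennreal (1 - \<theta>) * emeasure lborel (AA \<theta> 0 A) + ennreal \<theta> * emeasure lborel (AA \<theta> 1 A)"
  unfolding MM_def using A by (subst emeasure_addm) (auto simp: emeasure_LL)

lemma K_borel:
  assumes th: "0 < \<theta>" "\<theta> < 1" and A: "A \<in> sets borel"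
  shows "ennreal (1 - \<theta>) * emeasure lborel (AA \<theta> 0 A) + ennreal \<theta> * emeasure lborel (AA \<theta> 1 A) \<le> emeasure lborel A"
proof -
  have "emeasure (MM \<theta>) A \<le> emeasure lborel A"
  proof (rule le_measure_Ioc[OF _ _ _ _ A])
    show "sets (MM \<theta>) = sets borel" by (simp add: MM_def)
    show "sets lborel = sets borel" by simp
    show "emeasure lborel {a<..b} < \<infinity>" for a b :: real by (rule emeasure_lborel_Ioc_lt_top)
    fix a b :: real assume ab: "a \<le> b"
    note k = K_Ioc[OF th ab]
    have "emeasure (MM \<theta>) {a<..b} = ennreal (1 - \<theta>) * ennreal (measure lborel (AA \<theta> 0 {a<..b})) + ennreal \<theta> * ennreal (measure lborel (AA \<theta> 1 {a<..b}))"
      using k(1,2) by (simp add: emeasure_MM emeasure_eq_measure2)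
    also have "\<dots> = ennreal ((1 - \<theta>) * measure lborel (AA \<theta> 0 {a<..b}) + \<theta> * measure lborel (AA \<theta> 1 {a<..b}))"
      using th by (simp add: ennreal_mult'[symmetric] ennreal_plus[symmetric] del: ennreal_plus)
    also have "\<dots> \<le> ennreal (b - a)" using k(3) by (rule ennreal_leI)
    also have "\<dots> = emeasure lborel {a<..b}" using ab by simp
    finally show "emeasure (MM \<theta>) {a<..b} \<le> emeasure lborel {a<..b}" .
  qed
  then show ?thesis using A by (simp add: emeasure_MM)
qed

definition "Psi s = (\<integral>\<^sup>+x. ennreal (Mx x - s) \<partial>lborel)"

lemma B01:
  assumes th: "\<theta>0 = 0 \<or> \<theta>0 = 1" and s: "0 \<le> s" and A: "A \<in> sets borel"
  shows "emeasure (HMed N lam \<theta>0 \<nu>) A \<le> ennreal s * emeasure lborel A + Psi s"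
proof -
  have "emeasure (HMed N lam \<theta>0 \<nu>) A \<le> emeasure (density lborel (\<lambda>x. ennreal (Mx x))) A"
    by (rule HMed01_le[OF th A])
  also have "\<dots> = (\<integral>\<^sup>+x. ennreal (Mx x) * indicator A x \<partial>lborel)" using A by (simp add: emeasure_density)
  also have "\<dots> \<le> (\<integral>\<^sup>+x. ennreal s * indicator A x + ennreal (Mx x - s) * indicator A x \<partial>lborel)"
  proof (intro nn_integral_mono)
    fix x
    have "ennreal (Mx x) \<le> ennreal s + ennreal (Mx x - s)"
    proof (cases "s \<le> Mx x")
      case True
      then have "ennreal (Mx x) = ennreal (s + (Mx x - s))" by simp
      also have "\<dots> = ennreal s + ennreal (Mx x - s)" using s True by (intro ennreal_plus) auto
      finally show ?thesis by simp
    next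
      case False
      then have "ennreal (Mx x) \<le> ennreal s" by (intro ennreal_leI) simp
      then show ?thesis by (rule order_trans) simp
    qed
    then show "ennreal (Mx x) * indicator A x \<le> ennreal s * indicator A x + ennreal (Mx x - s) * indicator A x"
      by (auto simp: indicator_def)
  qed
  also have "\<dots> = ennreal s * emeasure lborel A + (\<integral>\<^sup>+x. ennreal (Mx x - s) * indicator A x \<partial>lborel)"
    using A by (subst nn_integral_add) (auto simp: nn_integral_cmult_indicator)
  also have "\<dots> \<le> ennreal s * emeasure lborel A + Psi s"
    unfolding Psi_def by (intro add_left_mono nn_integral_mono) (auto simp: indicator_def)
  finally show ?thesis .
qed

lemma B_int:
  assumes th: "0 < \<theta>" "\<theta> < 1" and s: "0 \<le> s" and A: "A \<in> sets borel"
  shows "emeasure (HMed N lam \<theta> \<nu>) A \<le> ennreal s * emeasure lborel A + Psi s"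
proof -
  define c0 where "c0 = ennreal (1 - \<theta>)"
  define c1 where "c1 = ennreal \<theta>"
  have c01: "c0 + c1 = 1" unfolding c0_def c1_def using th by (subst ennreal_plus[symmetric]) auto
  define m where "m = emeasure (HMed N lam \<theta> \<nu>) A"
  define L0 where "L0 = emeasure lborel (AA \<theta> 0 A)"
  define L1 where "L1 = emeasure lborel (AA \<theta> 1 A)"
  have "m = (c0 + c1) * m" by (simp add: c01)
  also have "\<dots> = c0 * emeasure (HMed N lam 0 \<nu>) (AA \<theta> 0 A) + c1 * emeasure (HMed N lam 1 \<nu>) (AA \<theta> 1 A)"
    unfolding m_def using E1[of 0 A \<theta>] E1[of 1 A \<theta>] A by (simp add: distrib_right)
  also have "\<dots> \<le> c0 * (ennreal s * L0 + Psi s) + c1 * (ennreal s * L1 + Psi s)"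
    unfolding L0_def L1_def using A s
    by (intro add_mono mult_left_mono B01) auto
  also have "\<dots> = ennreal s * (c0 * L0 + c1 * L1) + (c0 + c1) * Psi s"
    by (simp add: algebra_simps)
  also have "\<dots> = ennreal s * (c0 * L0 + c1 * L1) + Psi s"
    by (simp only: c01 mult_1)
  also have "\<dots> \<le> ennreal s * emeasure lborel A + Psi s"
    unfolding L0_def L1_def c0_def c1_def using K_borel[OF th A] by (intro add_mono mult_left_mono) auto
  finally show ?thesis by (simp add: m_def)
qed

lemma B_all:
  assumes th: "0 \<le> \<theta>" "\<theta> \<le> 1" and s: "0 \<le> s" and A: "A \<in> sets borel"
  shows "emeasure (HMed N lam \<theta> \<nu>) A \<le> ennreal s * emeasure lborel A + Psi s"
proof (cases "\<theta> = 0 \<or> \<theta> = 1")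
  case True then show ?thesis by (rule B01[OF _ s A])
next
  case False then show ?thesis using th by (intro B_int[OF _ _ s A]) auto
qed

lemma HMed_int_ac:
  assumes th: "0 < \<theta>" "\<theta> < 1" and A: "A \<in> sets borel" and L0: "emeasure lborel A = 0"
  shows "emeasure (HMed N lam \<theta> \<nu>) A = 0"
proof -
  have "ennreal (1 - \<theta>) * emeasure lborel (AA \<theta> 0 A) \<le> 0"
  proof -
    have "ennreal (1 - \<theta>) * emeasure lborel (AA \<theta> 0 A) \<le> ennreal (1 - \<theta>) * emeasure lborel (AA \<theta> 0 A) + ennreal \<theta> * emeasure lborel (AA \<theta> 1 A)"
      by (rule add_increasing2) simp_all
    also have "\<dots> \<le> 0" using K_borel[OF th A] L0 by simp
    finally show ?thesis .
  qed
  then have "emeasure lborel (AA \<theta> 0 A) = 0" using th by (simp add: ennreal_eq_0_iff)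
  then have "AA \<theta> 0 A \<in> null_sets lborel" using A by (simp add: null_sets_def)
  then have "emeasure (density lborel (\<lambda>x. ennreal (Mx x))) (AA \<theta> 0 A) = 0"
    using A by (subst emeasure_density) (auto intro!: nn_integral_null_set)
  moreover have "emeasure (HMed N lam 0 \<nu>) (AA \<theta> 0 A) \<le> emeasure (density lborel (\<lambda>x. ennreal (Mx x))) (AA \<theta> 0 A)"
    using A by (intro HMed01_le) auto
  ultimately show ?thesis using E1[of 0 A \<theta>] A by simp
qed

lemma HMed_density_exists:
  assumes th: "0 \<le> \<theta>" "\<theta> \<le> 1"
  shows "\<exists>g. is_density (HMed N lam \<theta> \<nu>) g"
proof (cases "\<theta> = 0 \<or> \<theta> = 1")
  case True
  then show ?thesis by (intro HMed_density_of_le HMed01_le) auto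
next
  case False
  show ?thesis
  proof (rule density_exists)
    show "emeasure (HMed N lam \<theta> \<nu>) UNIV < \<infinity>" using emeasure_HMed_UNIV by simp
    show "\<And>A. A \<in> sets borel \<Longrightarrow> emeasure lborel A = 0 \<Longrightarrow> emeasure (HMed N lam \<theta> \<nu>) A = 0"
      using False th by (intro HMed_int_ac) auto
  qed simp
qed

end



lemma layer_cake_pow:
  fixes p y :: real assumes p: "1 < p" and y: "0 \<le> y"
  shows "(\<integral>\<^sup>+r. ennreal (p * (p - 1) * r powr (p - 2)) * indicator {0<..} r * ennreal (y - r) \<partial>lborel) = ennreal (y powr p)"
proof -
  define h where "h r = p * (p - 1) * r powr (p - 2) * (y - r)" for r
  define H where "H r = p * y * r powr (p - 1) - (p - 1) * r powr p" for r
  have c1: "continuous_on {0..y} (\<lambda>r. r powr (p - 1))"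
    by (rule continuous_on_powr') (use p in \<open>auto intro: continuous_intros\<close>)
  have c2: "continuous_on {0..y} (\<lambda>r. r powr p)"
    by (rule continuous_on_powr') (use p in \<open>auto intro: continuous_intros\<close>)
  have cont: "continuous_on {0..y} H"
    unfolding H_def by (intro continuous_on_diff continuous_on_mult_left c1 c2)
  have der: "(H has_vector_derivative h r) (at r)" if r: "r \<in> {0<..<y}" for r
  proof -
    have r0: "0 < r" using r by simp
    have d1: "((\<lambda>z. z powr (p - 1)) has_real_derivative (p - 1) * r powr (p - 1 - 1)) (at r)"
      by (rule has_real_derivative_powr[OF r0])
    have d2: "((\<lambda>z. z powr p) has_real_derivative p * r powr (p - 1)) (at r)"
      by (rule has_real_derivative_powr[OF r0])
    have "(H has_real_derivative (p * y * ((p - 1) * r powr (p - 1 - 1)) - (p - 1) * (p * r powr (p - 1)))) (at r)"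
      unfolding H_def by (intro DERIV_diff DERIV_cmult d1 d2)
    moreover have "p * y * ((p - 1) * r powr (p - 1 - 1)) - (p - 1) * (p * r powr (p - 1)) = h r"
    proof -
      have "r powr (p - 1) = r powr ((p - 2) + 1)" by simp
      also have "\<dots> = r powr (p - 2) * r powr 1" by (rule powr_add)
      also have "\<dots> = r powr (p - 2) * r" using r0 by simp
      finally have "r powr (p - 1) = r powr (p - 2) * r" .
      then show ?thesis unfolding h_def by (simp add: algebra_simps)
    qed
    ultimately show ?thesis by (simp add: has_real_derivative_iff_has_vector_derivative)
  qed
  have hint: "(h has_integral (H y - H 0)) {0..y}"
    by (rule fundamental_theorem_of_calculus_interior[OF y cont der]) auto
  have Hy: "H y - H 0 = y powr p"
  proof (cases "y = 0")
    case True then show ?thesis using p by (simp add: H_def)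
  next
    case False
    then have "y * y powr (p - 1) = y powr p" using y by (simp add: powr_mult_base)
    then show ?thesis using p by (simp add: H_def algebra_simps)
  qed
  have hnn: "\<forall>r\<in>{0..y}. 0 \<le> h r" unfolding h_def using p by auto
  have "(\<integral>\<^sup>+r. ennreal (h r) * indicator {0..y} r \<partial>lborel) = ennreal (H y - H 0)"
    by (rule nn_integral_has_integral_lebesgue'[OF _ hint]) (use hnn in auto)
  moreover have "(\<integral>\<^sup>+r. ennreal (p * (p - 1) * r powr (p - 2)) * indicator {0<..} r * ennreal (y - r) \<partial>lborel)
      = (\<integral>\<^sup>+r. ennreal (h r) * indicator {0..y} r \<partial>lborel)"
  proof (intro nn_integral_cong)
    fix r :: real
    show "ennreal (p * (p - 1) * r powr (p - 2)) * indicator {0<..} r * ennreal (y - r) = ennreal (h r) * indicator {0..y} r"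
    proof (cases "0 < r")
      case True
      show ?thesis
      proof (cases "r \<le> y")
        case True
        then show ?thesis using \<open>0 < r\<close> p
          by (simp add: h_def ennreal_mult'[symmetric] mult.assoc indicator_def)
      next
        case False then show ?thesis using \<open>0 < r\<close> by (simp add: indicator_def ennreal_eq_0_iff)
      qed
    next
      case False
      then show ?thesis by (cases "r = 0") (auto simp: h_def indicator_def)
    qed
  qed
  ultimately show ?thesis using Hy by simp
qed

context hm begin

lemma dens_props:
  assumes g: "is_density (HMed N lam \<theta> \<nu>) g"
  shows "g \<in> borel_measurable borel" "\<And>x. 0 \<le> g x"
    "\<And>A. A \<in> sets borel \<Longrightarrow> emeasure (HMed N lam \<theta> \<nu>) A = (\<integral>\<^sup>+x. ennreal (g x) * indicator A x \<partial>lborel)"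
  using g by (auto simp: is_density_def emeasure_density)

lemma H1:
  assumes th: "0 \<le> \<theta>" "\<theta> \<le> 1" and g: "is_density (HMed N lam \<theta> \<nu>) g" and r: "0 < r"
  shows "(\<integral>\<^sup>+x. ennreal (g x - r) \<partial>lborel) \<le> Psi r"
proof -
  note gp = dens_props[OF g]
  have gm[measurable]: "g \<in> borel_measurable borel" by (rule gp(1))
  define A where "A = {x. r < g x}"
  have A: "A \<in> sets borel" unfolding A_def by measurable
  have split: "(\<integral>\<^sup>+x. ennreal (g x) * indicator A x \<partial>lborel) =
      (\<integral>\<^sup>+x. ennreal (g x - r) \<partial>lborel) + ennreal r * emeasure lborel A"
  proof -
    have "(\<integral>\<^sup>+x. ennreal (g x) * indicator A x \<partial>lborel) =
      (\<integral>\<^sup>+x. ennreal (g x - r) + ennreal r * indicator A x \<partial>lborel)"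
    proof (intro nn_integral_cong)
      fix x
      show "ennreal (g x) * indicator A x = ennreal (g x - r) + ennreal r * indicator A x"
      proof (cases "x \<in> A")
        case True
        then have "ennreal (g x) = ennreal ((g x - r) + r)" by simp
        also have "\<dots> = ennreal (g x - r) + ennreal r" using True r by (intro ennreal_plus) (auto simp: A_def)
        finally show ?thesis using True by simp
      next
        case False then show ?thesis by (simp add: A_def ennreal_eq_0_iff)
      qed
    qed
    also have "\<dots> = (\<integral>\<^sup>+x. ennreal (g x - r) \<partial>lborel) + ennreal r * emeasure lborel A"
      using A by (subst nn_integral_add) (auto simp: nn_integral_cmult_indicator)
    finally show ?thesis .
  qed
  have "ennreal r * emeasure lborel A \<le> (\<integral>\<^sup>+x. ennreal (g x) * indicator A x \<partial>lborel)"
    unfolding split by simp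
  also have "\<dots> = emeasure (HMed N lam \<theta> \<nu>) A" using gp(3)[OF A] by simp
  also have "\<dots> \<le> emeasure (HMed N lam \<theta> \<nu>) UNIV" by (rule emeasure_mono) auto
  also have "\<dots> = 1" by (rule emeasure_HMed_UNIV)
  finally have "ennreal r * emeasure lborel A \<le> 1" .
  then have fin: "ennreal r * emeasure lborel A \<noteq> \<infinity>" by (auto simp: top_unique)
  have "(\<integral>\<^sup>+x. ennreal (g x - r) \<partial>lborel) + ennreal r * emeasure lborel A \<le> ennreal r * emeasure lborel A + Psi r"
    using B_all[OF th _ A, of r] r gp(3)[OF A] split by simp
  then have "ennreal r * emeasure lborel A + (\<integral>\<^sup>+x. ennreal (g x - r) \<partial>lborel) \<le> ennreal r * emeasure lborel A + Psi r"
    by (simp add: add.commute)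
  then show ?thesis using fin by (simp add: ennreal_add_left_cancel_le)
qed

lemma H4:
  assumes th: "0 \<le> \<theta>" "\<theta> \<le> 1" and g: "is_density (HMed N lam \<theta> \<nu>) g"
    and C: "0 \<le> C" "AE x in lborel. Mx x \<le> C"
  shows "AE x in lborel. g x \<le> C"
proof -
  note gp = dens_props[OF g]
  have gm[measurable]: "g \<in> borel_measurable borel" by (rule gp(1))
  have "AE x in lborel. g x \<le> C + 1 / real (Suc n)" for n
  proof -
    define r where "r = C + 1 / real (Suc n)"
    have r: "0 < r" "C < r" using C by (auto simp: r_def intro!: add_nonneg_pos)
    have "Psi r = 0" unfolding Psi_def
    proof (subst nn_integral_0_iff_AE)
      show "AE x in lborel. ennreal (Mx x - r) = 0" using C(2) by eventually_elim (use r in \<open>simp add: ennreal_eq_0_iff\<close>)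
    qed simp
    then have "(\<integral>\<^sup>+x. ennreal (g x - r) \<partial>lborel) = 0" using H1[OF th g r(1)] by simp
    then have "AE x in lborel. ennreal (g x - r) = 0" by (subst (asm) nn_integral_0_iff_AE) simp_all
    then show ?thesis unfolding r_def[symmetric] by eventually_elim (simp add: ennreal_eq_0_iff)
  qed
  then have "AE x in lborel. \<forall>n. g x \<le> C + 1 / real (Suc n)" by (simp add: AE_all_countable)
  then show ?thesis
  proof eventually_elim
    fix x assume *: "\<forall>n. g x \<le> C + 1 / real (Suc n)"
    show "g x \<le> C"
    proof (rule field_le_epsilon)
      fix e :: real assume e: "0 < e"
      obtain n where "1 / real (Suc n) < e" using nat_approx_posE[OF e] by blast
      then show "g x \<le> C + e" using *[rule_format, of n] by simp
    qed
  qed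
qed

definition "Kp p r = ennreal (p * (p - 1) * r powr (p - 2)) * indicator {0<..} r"

lemma LC_int:
  fixes \<phi> :: "real \<Rightarrow> real"
  assumes p: "1 < p" and phm[measurable]: "\<phi> \<in> borel_measurable borel" and nn: "\<And>x. 0 \<le> \<phi> x"
  shows "(\<integral>\<^sup>+x. ennreal (\<phi> x powr p) \<partial>lborel) = (\<integral>\<^sup>+r. Kp p r * (\<integral>\<^sup>+x. ennreal (\<phi> x - r) \<partial>lborel) \<partial>lborel)"
proof -
  have "(\<integral>\<^sup>+x. ennreal (\<phi> x powr p) \<partial>lborel) = (\<integral>\<^sup>+x. (\<integral>\<^sup>+r. Kp p r * ennreal (\<phi> x - r) \<partial>lborel) \<partial>lborel)"
    by (intro nn_integral_cong) (simp add: Kp_def layer_cake_pow[OF p nn])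
  also have "\<dots> = (\<integral>\<^sup>+r. (\<integral>\<^sup>+x. Kp p r * ennreal (\<phi> x - r) \<partial>lborel) \<partial>lborel)"
  proof (rule lborel_pair.Fubini'[symmetric, where f="\<lambda>x r. Kp p r * ennreal (\<phi> x - r)"])
    show "(\<lambda>(x, r). Kp p r * ennreal (\<phi> x - r)) \<in> borel_measurable (lborel \<Otimes>\<^sub>M lborel)"
      unfolding Kp_def by measurable
  qed
  also have "\<dots> = (\<integral>\<^sup>+r. Kp p r * (\<integral>\<^sup>+x. ennreal (\<phi> x - r) \<partial>lborel) \<partial>lborel)"
    by (intro nn_integral_cong nn_integral_cmult) simp
  finally show ?thesis .
qed

lemma H3:
  assumes th: "0 \<le> \<theta>" "\<theta> \<le> 1" and g: "is_density (HMed N lam \<theta> \<nu>) g" and p: "1 < p"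
  shows "(\<integral>\<^sup>+x. ennreal (g x powr p) \<partial>lborel) \<le> (\<integral>\<^sup>+x. ennreal (Mx x powr p) \<partial>lborel)"
proof -
  note gp = dens_props[OF g]
  have "(\<integral>\<^sup>+x. ennreal (g x powr p) \<partial>lborel) = (\<integral>\<^sup>+r. Kp p r * (\<integral>\<^sup>+x. ennreal (g x - r) \<partial>lborel) \<partial>lborel)"
    by (rule LC_int[OF p gp(1) gp(2)])
  also have "\<dots> \<le> (\<integral>\<^sup>+r. Kp p r * Psi r \<partial>lborel)"
  proof (intro nn_integral_mono)
    fix r :: real
    show "Kp p r * (\<integral>\<^sup>+x. ennreal (g x - r) \<partial>lborel) \<le> Kp p r * Psi r"
    proof (cases "0 < r")
      case True then show ?thesis by (intro mult_left_mono H1[OF th g]) auto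
    next
      case False then show ?thesis by (simp add: Kp_def)
    qed
  qed
  also have "\<dots> = (\<integral>\<^sup>+x. ennreal (Mx x powr p) \<partial>lborel)"
    unfolding Psi_def by (rule LC_int[OF p Mx_meas Mx_nonneg, symmetric])
  finally show ?thesis .
qed

end



lemma le_powr_small:
  fixes x r :: real
  assumes x: "0 \<le> x" "x \<le> 1" and r: "0 < r" "r \<le> 1"
  shows "x \<le> x powr r"
proof (cases "x = 0")
  case True then show ?thesis by simp
next
  case False
  then have x0: "0 < x" using x by simp
  have z: "0 < x powr r" "x powr r \<le> 1" using x0 x r by (auto intro: powr_le1)
  have "(x powr r) powr (1 / r) \<le> x powr r" using z r by (intro powr_le_one_le) auto
  moreover have "(x powr r) powr (1 / r) = x" using r x0 by (simp add: powr_powr)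
  ultimately show ?thesis by simp
qed

lemma powr_subadd:
  fixes a b r :: real
  assumes a: "0 \<le> a" and b: "0 \<le> b" and r: "0 < r" "r \<le> 1"
  shows "(a + b) powr r \<le> a powr r + b powr r"
proof (cases "a + b = 0")
  case True then show ?thesis using a b by simp
next
  case False
  define s where "s = a + b"
  have s: "0 < s" using False a b by (simp add: s_def)
  have "a / s \<le> (a / s) powr r" using a b s r by (intro le_powr_small) (auto simp: s_def)
  moreover have "b / s \<le> (b / s) powr r" using a b s r by (intro le_powr_small) (auto simp: s_def)
  moreover have "a / s + b / s = 1" using s by (simp add: s_def add_divide_distrib[symmetric])
  ultimately have "1 \<le> (a / s) powr r + (b / s) powr r" by linarith
  also have "\<dots> = (a powr r + b powr r) / s powr r" using a b s by (simp add: powr_divide add_divide_distrib)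
  finally have "s powr r \<le> a powr r + b powr r" using s by (simp add: field_simps)
  then show ?thesis by (simp add: s_def)
qed

lemma powr_sum_le:
  fixes a :: "nat \<Rightarrow> real" and r :: real
  assumes "finite I" and a: "\<And>i. i \<in> I \<Longrightarrow> 0 \<le> a i" and r: "0 < r" "r \<le> 1"
  shows "(\<Sum>i\<in>I. a i) powr r \<le> (\<Sum>i\<in>I. a i powr r)"
  using assms(1) a
proof (induction I rule: finite_induct)
  case empty then show ?case by simp
next
  case (insert j I)
  have "(\<Sum>i\<in>insert j I. a i) powr r = (a j + (\<Sum>i\<in>I. a i)) powr r" using insert by simp
  also have "\<dots> \<le> a j powr r + (\<Sum>i\<in>I. a i) powr r"
    using insert r by (intro powr_subadd sum_nonneg) auto
  also have "\<dots> \<le> a j powr r + (\<Sum>i\<in>I. a i powr r)" using insert by simp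
  also have "\<dots> = (\<Sum>i\<in>insert j I. a i powr r)" using insert by simp
  finally show ?case .
qed

context hm begin

lemma esssup_abs_nonneg:
  fixes \<phi> :: "real \<Rightarrow> real"
  assumes [measurable]: "\<phi> \<in> borel_measurable borel"
  shows "0 \<le> esssup lborel (\<lambda>x. ereal \<bar>\<phi> x\<bar>)"
proof -
  show ?thesis
  proof (rule ccontr)
    assume "\<not> ?thesis"
    then have lt: "esssup lborel (\<lambda>x. ereal \<bar>\<phi> x\<bar>) < 0" by simp
    have "AE x in lborel. ereal \<bar>\<phi> x\<bar> \<le> esssup lborel (\<lambda>x. ereal \<bar>\<phi> x\<bar>)" by (rule esssup_AE)
    then obtain Nn where Nn: "{x \<in> space lborel. \<not> ereal \<bar>\<phi> x\<bar> \<le> esssup lborel (\<lambda>x. ereal \<bar>\<phi> x\<bar>)} \<subseteq> Nn"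
      "emeasure lborel Nn = 0" "Nn \<in> sets lborel" by (rule AE_E)
    have "UNIV \<subseteq> Nn"
    proof
      fix x :: real
      have "\<not> ereal \<bar>\<phi> x\<bar> \<le> esssup lborel (\<lambda>x. ereal \<bar>\<phi> x\<bar>)"
        using lt by (metis abs_ge_zero ereal_less_eq(5) not_le order_trans)
      then show "x \<in> Nn" using Nn(1) by auto
    qed
    then have "emeasure lborel (UNIV :: real set) \<le> emeasure lborel Nn" using Nn(3) by (intro emeasure_mono) auto
    then show False using Nn(2) by simp
  qed
qed

lemma Linf_part:
  assumes fi: "\<forall>i<N. memLp \<infinity> (f i)" and th: "0 \<le> \<theta>" "\<theta> \<le> 1" and g: "is_density (HMed N lam \<theta> \<nu>) g"
  shows "memLp \<infinity> g \<and> Lp_norm \<infinity> g \<le> Lp_norm \<infinity> Mx \<and> Lp_norm \<infinity> Mx \<le> (\<Sum>i<N. Lp_norm \<infinity> (f i))"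
proof -
  note gp = dens_props[OF g]
  have gm[measurable]: "g \<in> borel_measurable borel" by (rule gp(1))
  define E where "E i = esssup lborel (\<lambda>x. ereal \<bar>f i x\<bar>)" for i
  have Efin: "E i < \<infinity>" if "i < N" for i using fi that by (simp add: memLp_def E_def)
  have Enn: "0 \<le> E i" if "i < N" for i unfolding E_def using that by (intro esssup_abs_nonneg) simp
  have Ereal: "E i = ereal (real_of_ereal (E i))" if "i < N" for i
    using Efin[OF that] Enn[OF that] by (cases "E i") auto
  define S where "S = (\<Sum>i<N. real_of_ereal (E i))"
  have "AE x in lborel. \<forall>i\<in>{..<N}. ereal \<bar>f i x\<bar> \<le> E i"
    by (rule AE_finite_allI) (auto simp: E_def intro: esssup_AE)
  then have "AE x in lborel. ereal \<bar>Mx x\<bar> \<le> ereal S"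
  proof eventually_elim
    fix x assume *: "\<forall>i\<in>{..<N}. ereal \<bar>f i x\<bar> \<le> E i"
    have "Mx x \<le> (\<Sum>i<N. f i x)" by (rule Mx_le_sum)
    also have "\<dots> \<le> S" unfolding S_def
    proof (intro sum_mono)
      fix i assume i: "i \<in> {..<N}"
      have "ereal (f i x) \<le> ereal (real_of_ereal (E i))" using *[rule_format, OF i] Ereal[of i] i f_nonneg[of i x] by simp
      then show "f i x \<le> real_of_ereal (E i)" by simp
    qed
    finally show "ereal \<bar>Mx x\<bar> \<le> ereal S" using Mx_nonneg[of x] by simp
  qed
  then have EMle: "esssup lborel (\<lambda>x. ereal \<bar>Mx x\<bar>) \<le> ereal S" by (intro esssup_I) auto
  have EMnn: "0 \<le> esssup lborel (\<lambda>x. ereal \<bar>Mx x\<bar>)" by (rule esssup_abs_nonneg) simp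
  define C where "C = real_of_ereal (esssup lborel (\<lambda>x. ereal \<bar>Mx x\<bar>))"
  have EMC: "esssup lborel (\<lambda>x. ereal \<bar>Mx x\<bar>) = ereal C"
    using EMle EMnn unfolding C_def by (cases "esssup lborel (\<lambda>x. ereal \<bar>Mx x\<bar>)") auto
  have C0: "0 \<le> C" using EMC EMnn by simp
  have CS: "C \<le> S" using EMC EMle by simp
  have "AE x in lborel. ereal \<bar>Mx x\<bar> \<le> ereal C" using esssup_AE[of "\<lambda>x. ereal \<bar>Mx x\<bar>" lborel] EMC by simp
  then have "AE x in lborel. Mx x \<le> C" by eventually_elim (use Mx_nonneg in simp)
  from H4[OF th g C0 this] have "AE x in lborel. ereal \<bar>g x\<bar> \<le> ereal C"
    by eventually_elim (use gp(2) in simp)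
  then have EG: "esssup lborel (\<lambda>x. ereal \<bar>g x\<bar>) \<le> ereal C" by (intro esssup_I) auto
  have EGnn: "0 \<le> esssup lborel (\<lambda>x. ereal \<bar>g x\<bar>)" by (rule esssup_abs_nonneg) simp
  have m: "memLp \<infinity> g" unfolding memLp_def using EG by (auto simp: le_less_trans)
  have n1: "Lp_norm \<infinity> g \<le> Lp_norm \<infinity> Mx"
    unfolding Lp_norm_def using EG EGnn EMC
    by (cases "esssup lborel (\<lambda>x. ereal \<bar>g x\<bar>)") auto
  have "Lp_norm \<infinity> Mx = C" unfolding Lp_norm_def C_def by simp
  moreover have "(\<Sum>i<N. Lp_norm \<infinity> (f i)) = S" unfolding Lp_norm_def S_def E_def by simp
  ultimately have n2: "Lp_norm \<infinity> Mx \<le> (\<Sum>i<N. Lp_norm \<infinity> (f i))" using CS by simp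
  show ?thesis using m n1 n2 by simp
qed

lemma Lp_part:
  assumes q: "1 \<le> q" and fi: "\<forall>i<N. memLp (ereal q) (f i)" and th: "0 \<le> \<theta>" "\<theta> \<le> 1"
    and g: "is_density (HMed N lam \<theta> \<nu>) g"
  shows "memLp (ereal q) g \<and> Lp_norm (ereal q) g \<le> Lp_norm (ereal q) Mx \<and> Lp_norm (ereal q) Mx \<le> (\<Sum>i<N. Lp_norm (ereal q) (f i))"
proof -
  note gp = dens_props[OF g]
  have gm[measurable]: "g \<in> borel_measurable borel" by (rule gp(1))
  have intf: "integrable lborel (\<lambda>x. f i x powr q)" if "i < N" for i
  proof -
    have "integrable lborel (\<lambda>x. \<bar>f i x\<bar> powr q)" using fi that by (simp add: memLp_def)
    moreover have "(\<lambda>x. \<bar>f i x\<bar> powr q) = (\<lambda>x. f i x powr q)" using f_nonneg[OF that] by simp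
    ultimately show ?thesis by simp
  qed
  have nnf: "(\<integral>\<^sup>+x. ennreal (f i x powr q) \<partial>lborel) = ennreal (\<integral>x. f i x powr q \<partial>lborel)" if "i < N" for i
    by (rule nn_integral_eq_integral[OF intf[OF that]]) simp
  have Mxq: "Mx x powr q \<le> (\<Sum>i<N. f i x powr q)" for x
  proof -
    obtain j where j: "j < N" "Mx x = f j x" using Mx_attained by blast
    have "f j x powr q \<le> (\<Sum>i<N. f i x powr q)" using j(1) by (intro member_le_sum) auto
    then show ?thesis using j by simp
  qed
  have intsum: "integrable lborel (\<lambda>x. \<Sum>i<N. f i x powr q)"
    by (rule Bochner_Integration.integrable_sum) (use intf in auto)
  have intM: "integrable lborel (\<lambda>x. Mx x powr q)"
  proof (rule Bochner_Integration.integrable_bound[OF intsum])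
    show "(\<lambda>x. Mx x powr q) \<in> borel_measurable lborel" by simp
    show "AE x in lborel. norm (Mx x powr q) \<le> norm (\<Sum>i<N. f i x powr q)"
      by (intro AE_I2) (simp add: order_trans[OF Mxq abs_ge_self])
  qed
  have IMle: "(\<integral>x. Mx x powr q \<partial>lborel) \<le> (\<Sum>i<N. \<integral>x. f i x powr q \<partial>lborel)"
  proof -
    have "(\<integral>x. Mx x powr q \<partial>lborel) \<le> (\<integral>x. (\<Sum>i<N. f i x powr q) \<partial>lborel)"
      by (rule integral_mono[OF intM intsum Mxq])
    also have "\<dots> = (\<Sum>i<N. \<integral>x. f i x powr q \<partial>lborel)" by (rule Bochner_Integration.integral_sum) (use intf in auto)
    finally show ?thesis .
  qed
  have key: "(\<integral>\<^sup>+x. ennreal (g x powr q) \<partial>lborel) \<le> (\<integral>\<^sup>+x. ennreal (Mx x powr q) \<partial>lborel)"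
  proof (cases "q = 1")
    case True
    have "(\<integral>\<^sup>+x. ennreal (g x) \<partial>lborel) = emeasure (HMed N lam \<theta> \<nu>) UNIV"
      using gp(3)[of UNIV] by simp
    also have "\<dots> \<le> ennreal 0 * emeasure lborel (UNIV :: real set) + Psi 0" by (rule B_all[OF th]) auto
    also have "\<dots> = (\<integral>\<^sup>+x. ennreal (Mx x) \<partial>lborel)" by (simp add: Psi_def)
    finally show ?thesis using True gp(2) Mx_nonneg by (simp add: powr_one)
  next
    case False
    then show ?thesis using q by (intro H3[OF th g]) auto
  qed
  have nnM: "(\<integral>\<^sup>+x. ennreal (Mx x powr q) \<partial>lborel) = ennreal (\<integral>x. Mx x powr q \<partial>lborel)"
    by (rule nn_integral_eq_integral[OF intM]) simp
  have intg: "integrable lborel (\<lambda>x. g x powr q)"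
    by (rule integrableI_nonneg) (use key nnM in \<open>auto simp: le_less_trans\<close>)
  have nng: "(\<integral>\<^sup>+x. ennreal (g x powr q) \<partial>lborel) = ennreal (\<integral>x. g x powr q \<partial>lborel)"
    by (rule nn_integral_eq_integral[OF intg]) simp
  have Igle: "(\<integral>x. g x powr q \<partial>lborel) \<le> (\<integral>x. Mx x powr q \<partial>lborel)"
    using key nng nnM by (simp add: ennreal_le_iff integral_nonneg_AE)
  have absg: "(\<lambda>x. \<bar>g x\<bar> powr q) = (\<lambda>x. g x powr q)" using gp(2) by simp
  have absM: "(\<lambda>x. \<bar>Mx x\<bar> powr q) = (\<lambda>x. Mx x powr q)" using Mx_nonneg by simp
  have absf: "(\<lambda>x. \<bar>f i x\<bar> powr q) = (\<lambda>x. f i x powr q)" if "i < N" for i using f_nonneg[OF that] by simp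
  have m: "memLp (ereal q) g" unfolding memLp_def using intg absg by simp
  have Lg: "Lp_norm (ereal q) g = (\<integral>x. g x powr q \<partial>lborel) powr (1 / q)"
    by (simp add: Lp_norm_def abs_of_nonneg gp(2))
  have LM: "Lp_norm (ereal q) Mx = (\<integral>x. Mx x powr q \<partial>lborel) powr (1 / q)"
    by (simp add: Lp_norm_def abs_of_nonneg Mx_nonneg)
  have Lf: "Lp_norm (ereal q) (f i) = (\<integral>x. f i x powr q \<partial>lborel) powr (1 / q)" if "i < N" for i
    using that by (simp add: Lp_norm_def abs_of_nonneg f_nonneg)
  have n1: "Lp_norm (ereal q) g \<le> Lp_norm (ereal q) Mx"
    unfolding Lg LM using Igle q
    by (intro powr_mono2) (auto simp: integral_nonneg_AE)
  have "Lp_norm (ereal q) Mx = (\<integral>x. Mx x powr q \<partial>lborel) powr (1 / q)" by (rule LM)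
  also have "\<dots> \<le> (\<Sum>i<N. \<integral>x. f i x powr q \<partial>lborel) powr (1 / q)"
    using IMle q by (intro powr_mono2) (auto simp: integral_nonneg_AE)
  also have "\<dots> \<le> (\<Sum>i<N. (\<integral>x. f i x powr q \<partial>lborel) powr (1 / q))"
    using q by (intro powr_sum_le) (auto simp: integral_nonneg_AE)
  also have "\<dots> = (\<Sum>i<N. Lp_norm (ereal q) (f i))"
    by (rule sum.cong) (auto simp: Lf)
  finally have n2: "Lp_norm (ereal q) Mx \<le> (\<Sum>i<N. Lp_norm (ereal q) (f i))" .
  show ?thesis using m n1 n2 by simp
qed

end

theorem theorem4p7:
  fixes N :: nat and lam :: "nat \<Rightarrow> real" and \<nu> :: "nat \<Rightarrow> real measure"
    and f :: "nat \<Rightarrow> real \<Rightarrow> real"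
  assumes lam_nonneg: "\<forall>i<N. 0 \<le> lam i" and lam_sum: "(\<Sum>i<N. lam i) = 1"
    and nu_prob: "\<forall>i<N. prob_space (\<nu> i) \<and> sets (\<nu> i) = sets borel"
    and nu_P1: "\<forall>i<N. integrable (\<nu> i) (\<lambda>x. x)"
    and f_dens: "\<forall>i<N. is_density (\<nu> i) (f i)"
    and f_L1: "\<forall>i<N. integrable lborel (f i)"
  shows
    "(\<exists>g0 g1. is_density (HMed N lam 0 \<nu>) g0 \<and> is_density (HMed N lam 1 \<nu>) g1 \<and>
        (AE x in lborel.
           Min ((\<lambda>i. f i x) ` {..<N}) \<le> min (g0 x) (g1 x) \<and>
           max (g0 x) (g1 x) \<le> Max ((\<lambda>i. f i x) ` {..<N})))
   \<and> (\<forall>\<theta>\<in>{0..1}. \<exists>g. is_density (HMed N lam \<theta> \<nu>) g)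
   \<and> (\<forall>p::ereal. 1 \<le> p \<longrightarrow> (\<forall>i<N. memLp p (f i)) \<longrightarrow>
        (\<forall>\<theta>\<in>{0..1}. \<forall>g. is_density (HMed N lam \<theta> \<nu>) g \<longrightarrow>
           memLp p g \<and>
           Lp_norm p g \<le> Lp_norm p (\<lambda>x. Max ((\<lambda>i. f i x) ` {..<N})) \<and>
           Lp_norm p (\<lambda>x. Max ((\<lambda>i. f i x) ` {..<N})) \<le> (\<Sum>i<N. Lp_norm p (f i))))"
proof -
  interpret hm N lam \<nu> f
    by (rule hm.intro) (fact lam_nonneg lam_sum nu_prob f_dens)+
  have MxE: "(\<lambda>x. Max ((\<lambda>i. f i x) ` {..<N})) = Mx" by (simp add: Mx_def[abs_def])
  have mnE: "\<And>x. Min ((\<lambda>i. f i x) ` {..<N}) = mn x" by (simp add: mn_def)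
  have MxE': "\<And>x. Max ((\<lambda>i. f i x) ` {..<N}) = Mx x" by (simp add: Mx_def)
  have P1: "\<exists>g0 g1. is_density (HMed N lam 0 \<nu>) g0 \<and> is_density (HMed N lam 1 \<nu>) g1 \<and>
        (AE x in lborel. mn x \<le> min (g0 x) (g1 x) \<and> max (g0 x) (g1 x) \<le> Mx x)"
  proof -
    obtain g0 where g0: "is_density (HMed N lam 0 \<nu>) g0" using HMed_density_exists[of 0] by auto
    obtain g1 where g1: "is_density (HMed N lam 1 \<nu>) g1" using HMed_density_exists[of 1] by auto
    have a1: "AE x in lborel. g0 x \<le> Mx x" by (rule dens_le_Mx[OF g0 HMed01_le]) auto
    have a2: "AE x in lborel. g1 x \<le> Mx x" by (rule dens_le_Mx[OF g1 HMed01_le]) auto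
    have a3: "AE x in lborel. mn x \<le> g0 x" by (rule dens_ge_mn[OF g0]) auto
    have a4: "AE x in lborel. mn x \<le> g1 x" by (rule dens_ge_mn[OF g1]) auto
    have "AE x in lborel. mn x \<le> min (g0 x) (g1 x) \<and> max (g0 x) (g1 x) \<le> Mx x"
      using a1 a2 a3 a4 by eventually_elim simp
    then show ?thesis using g0 g1 by blast
  qed
  have P2: "\<forall>\<theta>\<in>{0..1}. \<exists>g. is_density (HMed N lam \<theta> \<nu>) g"
    using HMed_density_exists by auto
  have P3: "\<forall>p::ereal. 1 \<le> p \<longrightarrow> (\<forall>i<N. memLp p (f i)) \<longrightarrow>
        (\<forall>\<theta>\<in>{0..1}. \<forall>g. is_density (HMed N lam \<theta> \<nu>) g \<longrightarrow>
           memLp p g \<and> Lp_norm p g \<le> Lp_norm p Mx \<and> Lp_norm p Mx \<le> (\<Sum>i<N. Lp_norm p (f i)))"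
  proof (intro allI impI ballI)
    fix p :: ereal and \<theta> :: real and g
    assume p: "1 \<le> p" and fi: "\<forall>i<N. memLp p (f i)" and th: "\<theta> \<in> {0..1}" and g: "is_density (HMed N lam \<theta> \<nu>) g"
    have th1: "0 \<le> \<theta>" "\<theta> \<le> 1" using th by auto
    show "memLp p g \<and> Lp_norm p g \<le> Lp_norm p Mx \<and> Lp_norm p Mx \<le> (\<Sum>i<N. Lp_norm p (f i))"
    proof (cases p)
      case (real q)
      have q1: "1 \<le> q" using p real by simp
      have fi': "\<forall>i<N. memLp (ereal q) (f i)" using fi real by simp
      show ?thesis unfolding real by (rule Lp_part[OF q1 fi' th1 g])
    next
      case PInf
      have fi': "\<forall>i<N. memLp \<infinity> (f i)" using fi PInf by simp
      show ?thesis unfolding PInf by (rule Linf_part[OF fi' th1 g])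
    next
      case MInf
      then show ?thesis using p by simp
    qed
  qed
  show ?thesis unfolding MxE' mnE
  proof (intro conjI)
    show "\<exists>g0 g1. is_density (HMed N lam 0 \<nu>) g0 \<and> is_density (HMed N lam 1 \<nu>) g1 \<and>
        (AE x in lborel. mn x \<le> min (g0 x) (g1 x) \<and> max (g0 x) (g1 x) \<le> Mx x)" by (rule P1)
    show "\<forall>\<theta>\<in>{0..1}. \<exists>g. is_density (HMed N lam \<theta> \<nu>) g" by (rule P2)
    show "\<forall>p::ereal. 1 \<le> p \<longrightarrow> (\<forall>i<N. memLp p (f i)) \<longrightarrow>
        (\<forall>\<theta>\<in>{0..1}. \<forall>g. is_density (HMed N lam \<theta> \<nu>) g \<longrightarrow>
           memLp p g \<and> Lp_norm p g \<le> Lp_norm p Mx \<and> Lp_norm p Mx \<le> (\<Sum>i<N. Lp_norm p (f i)))" by (rule P3)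
  qed
qed


end
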